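(* Let $d\in\mathbb{N}^+$, $a<b$, $p\in[1,\infty)$, and let $N\ge 36d(2d+1)$ and $L\ge 11$ be integers. Then $\mathscr{H}_d(N,L)$ (restricted to $[a,b]^d$) is dense in $L^p([a,b]^d)$; i.e., for every $f\in L^p([a,b]^d)$ and $\varepsilon>0$ there exists $\phi\in\mathscr{H}_d(N,L)$ with $\|\phi-f\|_{L^p([a,b]^d)}<\varepsilon$.
   Context: Let $\sigma_1:\mathbb{R}\to\mathbb{R}$ be the continuous triangular-wave function of period $2$: $\sigma_1(x)=|x|$ for $x\in[-1,1]$ and $\sigma_1(x+2)=\sigma_1(x)$ for all $x$. Let $\sigma_2(x)=x/(|x|+1)$. The activation function is $\sigma(x)=\sigma_1(x)$ for $x\ge 0$ and $\sigma(x)=\sigma_2(x)$ for $x<0$, applied to vectors entrywise. For $N,L\in\mathbb{N}^+$, $\mathscr{H}_d(N,L)$ is the set of all functions $\phi:\mathbb{R}^d\to\mathbb{R}$ of the form $\phi=\mathcal{L}_L\circ\sigma\circ\mathcal{L}_{L-1}\circ\cdots\circ\sigma\circ\mathcal{L}_1\circ\sigma\circ\mathcal{L}_0$, where $\mathcal{L}_0:\mathbb{R}^d\to\mathbb{R}^N$, $\mathcal{L}_i:\mathbb{R}^N\to\mathbb{R}^N$ ($1\le i\le L-1$), $\mathcal{L}_L:\mathbb{R}^N\to\mathbb{R}$ are arbitrary affine maps. *)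

theory Defs
  imports "HOL-Analysis.Analysis"
begin

text \<open>Triangular wave of period 2: equals abs x on [-1,1], 2-periodic.\<close>
definition sigma1 :: "real \<Rightarrow> real" where
  "sigma1 x = \<bar>x - 2 * real_of_int \<lfloor>(x + 1) / 2\<rfloor>\<bar>"

definition sigma2 :: "real \<Rightarrow> real" where
  "sigma2 x = x / (\<bar>x\<bar> + 1)"

definition act :: "real \<Rightarrow> real" where
  "act x = (if x \<ge> 0 then sigma1 x else sigma2 x)"

text \<open>Hidden layers h \<mapsto> act (W h + c) on R^N (vectors as nat-indexed functions,
  only indices < N are relevant).\<close>
fun hidden_layers :: "nat \<Rightarrow> ((nat \<Rightarrow> nat \<Rightarrow> real) \<times> (nat \<Rightarrow> real)) list
    \<Rightarrow> (nat \<Rightarrow> real) \<Rightarrow> (nat \<Rightarrow> real)" where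
  "hidden_layers N [] h = h"
| "hidden_layers N ((W, c) # ls) h =
     hidden_layers N ls (\<lambda>i. act ((\<Sum>j<N. W i j * h j) + c i))"

text \<open>The hypothesis class H_d(N,L), with d = CARD('n).\<close>
definition NN_class :: "nat \<Rightarrow> nat \<Rightarrow> (real^'n \<Rightarrow> real) set" where
  "NN_class N L = {\<phi>. \<exists>(W0 :: nat \<Rightarrow> 'n \<Rightarrow> real) (c0 :: nat \<Rightarrow> real) Ws
       (v :: nat \<Rightarrow> real) (e :: real).
     length Ws = L - 1 \<and>
     \<phi> = (\<lambda>x. (\<Sum>j<N. v j * hidden_layers N Ws
                 (\<lambda>i. act ((\<Sum>k\<in>UNIV. W0 i k * x $ k) + c0 i)) j) + e)}"

definition cube :: "real \<Rightarrow> real \<Rightarrow> (real^'n) set" where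
  "cube a b = cbox (\<chi> i. a) (\<chi> i. b)"

end

theory Submission
  imports Defs "HOL-Computational_Algebra.Polynomial"
begin


lemma act_meas[measurable]: "act \<in> borel_measurable borel"
  unfolding act_def sigma1_def sigma2_def by measurable

lemma sigma1_period: "sigma1 (x + 2 * real_of_int k) = sigma1 x"
proof -
  have "(x + 2 * real_of_int k + 1) / 2 = (x + 1) / 2 + real_of_int k" by (simp add: field_simps)
  then have "\<lfloor>(x + 2 * real_of_int k + 1) / 2\<rfloor> = \<lfloor>(x + 1) / 2\<rfloor> + k" by (simp only: floor_add_int)
  then show ?thesis unfolding sigma1_def by simp
qed

lemma sigma1_01: "0 \<le> x \<Longrightarrow> x \<le> 1 \<Longrightarrow> sigma1 x = x"
proof (cases "x = 1")
  case True
  then have "\<lfloor>(x + 1) / 2\<rfloor> = 1" by simp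
  then show ?thesis using True unfolding sigma1_def by simp
next
  case False
  assume "0 \<le> x" "x \<le> 1"
  then have "\<lfloor>(x + 1) / 2\<rfloor> = 0" using False by (intro floor_unique) auto
  then show ?thesis using \<open>0 \<le> x\<close> unfolding sigma1_def by simp
qed

lemma sigma1_12: "1 \<le> x \<Longrightarrow> x \<le> 2 \<Longrightarrow> sigma1 x = 2 - x"
proof -
  assume "1 \<le> x" "x \<le> 2"
  then have "\<lfloor>(x + 1) / 2\<rfloor> = 1" by (intro floor_unique) auto
  then show ?thesis using \<open>1 \<le> x\<close> \<open>x \<le> 2\<close> unfolding sigma1_def by simp
qed

lemma sigma1_m10: "-1 \<le> x \<Longrightarrow> x \<le> 0 \<Longrightarrow> sigma1 x = - x"
proof -
  assume "-1 \<le> x" "x \<le> 0"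
  then have "\<lfloor>(x + 1) / 2\<rfloor> = 0" by (intro floor_unique) auto
  then show ?thesis using \<open>x \<le> 0\<close> unfolding sigma1_def by simp
qed

lemma sigma1_bounds: "0 \<le> sigma1 x \<and> sigma1 x \<le> 1"
proof -
  have "real_of_int \<lfloor>(x + 1) / 2\<rfloor> \<le> (x+1)/2" "(x+1)/2 < real_of_int \<lfloor>(x + 1) / 2\<rfloor> + 1"
    by linarith+
  then have "-1 \<le> x - 2 * real_of_int \<lfloor>(x + 1) / 2\<rfloor>" "x - 2 * real_of_int \<lfloor>(x + 1) / 2\<rfloor> \<le> 1"
    by (simp_all add: field_simps)
  then show ?thesis unfolding sigma1_def by (simp only: abs_ge_zero abs_le_iff) simp
qed

lemma act_bound: "\<bar>act x\<bar> \<le> 1"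
proof (cases "x \<ge> 0")
  case True then show ?thesis using sigma1_bounds[of x] unfolding act_def by simp
next
  case False
  have "\<bar>x / (\<bar>x\<bar> + 1)\<bar> = \<bar>x\<bar> / (\<bar>x\<bar> + 1)" by (simp add: abs_div)
  also have "\<dots> \<le> 1" by simp
  finally show ?thesis using False unfolding act_def sigma2_def by simp
qed

lemma act_id: "0 \<le> x \<Longrightarrow> x \<le> 1 \<Longrightarrow> act x = x"
  by (simp add: act_def sigma1_01)

lemma act_abs: assumes "-1 \<le> u" "u \<le> 1" shows "act (u + 1) = 1 - \<bar>u\<bar>"
proof (cases "u \<ge> 0")
  case True
  then have "sigma1 (u+1) = 2 - (u+1)" using sigma1_12[of "u+1"] \<open>u \<le> 1\<close> by simp
  then show ?thesis using True unfolding act_def by simp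
next
  case False
  have "sigma1 (u+1) = u+1" using sigma1_01[of "u+1"] False assms by simp
  then show ?thesis using False \<open>-1 \<le> u\<close> unfolding act_def by simp
qed

lemma act_neg: "y > 0 \<Longrightarrow> act (- y) = - y / (y + 1)"
  unfolding act_def sigma2_def by simp

lemma act_pos: "x \<ge> 0 \<Longrightarrow> act x = sigma1 x"
  unfolding act_def by simp

lemma sigma1_near: assumes "0 \<le> y" "y \<le> 1" "\<bar>e\<bar> \<le> 1"
  shows "\<bar>sigma1 (y + e) - y\<bar> \<le> \<bar>e\<bar>"
proof (cases "y + e \<le> 0")
  case True then show ?thesis using assms sigma1_m10[of "y+e"] by auto
next
  case False
  show ?thesis
  proof (cases "y + e \<le> 1")
    case True then show ?thesis using False assms sigma1_01[of "y+e"] by auto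
  next
    case F2: False
    then show ?thesis using assms sigma1_12[of "y+e"] by auto
  qed
qed




lemma act_zero[simp]: "act 0 = 0"
  using act_id[of 0] by simp

lemma hidden_layers_append:
  "hidden_layers N (xs @ ys) h = hidden_layers N ys (hidden_layers N xs h)"
proof (induction xs arbitrary: h)
  case Nil then show ?case by simp
next
  case (Cons l ls)
  obtain W c where "l = (W, c)" by (cases l)
  then show ?case using Cons by simp
qed

lemma hidden_layers_bound:
  "Ws \<noteq> [] \<Longrightarrow> \<bar>hidden_layers N Ws h j\<bar> \<le> 1"
proof (induction Ws arbitrary: h)
  case Nil then show ?case by simp
next
  case (Cons l ls)
  obtain W c where l: "l = (W, c)" by (cases l)
  show ?case
  proof (cases "ls = []")
    case True then show ?thesis using l by (simp add: act_bound)
  next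
    case False then show ?thesis using Cons l by simp
  qed
qed

lemma hidden_layers_meas:
  assumes "\<And>j. (\<lambda>x. h x j) \<in> borel_measurable M"
  shows "(\<lambda>x. hidden_layers N Ws (h x) j) \<in> borel_measurable M"
  using assms
proof (induction Ws arbitrary: h j)
  case Nil then show ?case by simp
next
  case (Cons l ls)
  obtain W c where l: "l = (W, c)" by (cases l)
  have "(\<lambda>x. act ((\<Sum>j<N. W i j * h x j) + c i)) \<in> borel_measurable M" for i
    using Cons.prems by measurable
  then show ?case using Cons.IH[of "\<lambda>x i. act ((\<Sum>j<N. W i j * h x j) + c i)"] l by simp
qed

definition one_layer :: "real \<Rightarrow> real \<Rightarrow> (nat \<Rightarrow> nat \<Rightarrow> real) \<times> (nat \<Rightarrow> real)" where
  "one_layer w b = ((\<lambda>i j. if i = 0 \<and> j = 0 then w else 0), (\<lambda>i. if i = 0 then b else 0))"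

lemma one_layer_step:
  assumes "0 < N"
  shows "hidden_layers N (one_layer w b # ls) h =
     hidden_layers N ls (\<lambda>i. if i = 0 then act (w * h 0 + b) else 0)"
proof -
  have eq: "(\<lambda>i. act ((\<Sum>j<N. (if i = 0 \<and> j = 0 then w else 0) * h j) + (if i = 0 then b else 0)))
     = (\<lambda>i. if i = 0 then act (w * h 0 + b) else 0)"
  proof
    fix i
    have "(\<Sum>j<N. (if i = 0 \<and> j = 0 then w else 0) * h j) = (if i = 0 then w * h 0 else 0)"
      using assms by (auto simp: if_distrib[where f="\<lambda>z. z * _"] sum.delta cong: if_cong)
    then show "act ((\<Sum>j<N. (if i = 0 \<and> j = 0 then w else 0) * h j) + (if i = 0 then b else 0))
       = (if i = 0 then act (w * h 0 + b) else 0)" by simp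
  qed
  show ?thesis unfolding one_layer_def hidden_layers.simps by (simp only: eq)
qed

lemma one_layer_rep:
  assumes "0 < N" "0 \<le> y" "y \<le> 1"
  shows "hidden_layers N (replicate k (one_layer 1 0)) (\<lambda>i. if i = 0 then y else 0) =
     (\<lambda>i. if i = 0 then y else 0)"
proof (induction k)
  case 0 then show ?case by simp
next
  case (Suc k)
  have "hidden_layers N (replicate (Suc k) (one_layer 1 0)) (\<lambda>i. if i = 0 then y else 0)
     = hidden_layers N (replicate k (one_layer 1 0)) (\<lambda>i. if i = 0 then act (1 * y + 0) else 0)"
    using one_layer_step[OF assms(1)] by simp
  also have "(\<lambda>i::nat. if i = 0 then act (1 * y + 0) else 0) = (\<lambda>i::nat. if i = 0 then y else (0::real))"
  proof -
    have e: "act (1 * y + 0) = y" using act_id[OF assms(2,3)] by simp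
    show ?thesis by (simp only: e)
  qed
  finally show ?case using Suc by simp
qed

lemma sum_group4: "(\<Sum>j<4*(d::nat). F j) = (\<Sum>q<d. \<Sum>r<4. F (4*q + r))"
proof (induction d)
  case 0 then show ?case by simp
next
  case (Suc d)
  have e: "4 * Suc d = Suc (Suc (Suc (Suc (4*d))))" by simp
  have "(\<Sum>j<4 * Suc d. F j) = (\<Sum>j<4*d. F j) + (F (4*d) + F (Suc (4*d)) + F (Suc (Suc (4*d))) + F (Suc (Suc (Suc (4*d)))))"
    unfolding e sum.lessThan_Suc by (simp add: add.assoc)
  moreover have "(\<Sum>r<4. F (4*d + r)) = F (4*d) + F (Suc (4*d)) + F (Suc (Suc (4*d))) + F (Suc (Suc (Suc (4*d))))"
    by (simp add: numeral_eq_Suc add.assoc)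
  ultimately show ?case using Suc by simp
qed

definition blk :: "nat \<Rightarrow> (nat \<Rightarrow> nat \<Rightarrow> real) \<Rightarrow> nat \<Rightarrow> nat \<Rightarrow> real" where
  "blk d B i j = (if i < 4*d \<and> j < 4*d \<and> i div 4 = j div 4 then B (i mod 4) (j mod 4) else 0)"

definition bb :: "nat \<Rightarrow> (nat \<Rightarrow> real) \<Rightarrow> nat \<Rightarrow> real" where
  "bb d \<beta> i = (if i < 4*d then \<beta> (i mod 4) else 0)"

definition blkval :: "nat \<Rightarrow> (nat \<Rightarrow> nat \<Rightarrow> real) \<Rightarrow> (nat \<Rightarrow> real) \<Rightarrow> (nat \<Rightarrow> real) \<Rightarrow> nat \<Rightarrow> real" where
  "blkval d B \<beta> h i = (if i < 4*d then
      act ((\<Sum>r<4. B (i mod 4) r * h (4*(i div 4) + r)) + \<beta> (i mod 4)) else 0)"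

lemma blk_sum:
  assumes "4*d \<le> N" "i < 4*d"
  shows "(\<Sum>j<N. blk d B i j * h j) = (\<Sum>r<4. B (i mod 4) r * h (4*(i div 4) + r))"
proof -
  have "(\<Sum>j<N. blk d B i j * h j) = (\<Sum>j<4*d. blk d B i j * h j)"
    using assms by (intro sum.mono_neutral_right) (auto simp: blk_def)
  also have "\<dots> = (\<Sum>q<d. \<Sum>r<4. blk d B i (4*q+r) * h (4*q+r))"
    by (rule sum_group4)
  also have "\<dots> = (\<Sum>q<d. if q = i div 4 then (\<Sum>r<4. B (i mod 4) r * h (4*q+r)) else 0)"
  proof (intro sum.cong refl)
    fix q assume q: "q \<in> {..<d}"
    show "(\<Sum>r<4. blk d B i (4*q+r) * h (4*q+r)) = (if q = i div 4 then (\<Sum>r<4. B (i mod 4) r * h (4*q+r)) else 0)"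
    proof (cases "q = i div 4")
      case True
      have "(\<Sum>r<4. blk d B i (4*q+r) * h (4*q+r)) = (\<Sum>r<4. B (i mod 4) r * h (4*q+r))"
      proof (intro sum.cong refl)
        fix r :: nat assume "r \<in> {..<4}"
        then have "4*q+r < 4*d" "(4*q+r) div 4 = q" "(4*q+r) mod 4 = r" using q by auto
        then show "blk d B i (4*q+r) * h (4*q+r) = B (i mod 4) r * h (4*q+r)"
          using True assms by (simp add: blk_def)
      qed
      then show ?thesis using True by simp
    next
      case False
      have "blk d B i (4*q+r) = 0" if "r < 4" for r
        using False that by (simp add: blk_def)
      then show ?thesis using False by simp
    qed
  qed
  also have "\<dots> = (\<Sum>r<4. B (i mod 4) r * h (4*(i div 4) + r))"
    using assms by (simp add: sum.delta)
  finally show ?thesis .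
qed

lemma blk_step:
  assumes "4*d \<le> N"
  shows "hidden_layers N ((blk d B, bb d \<beta>) # ls) h = hidden_layers N ls (blkval d B \<beta> h)"
proof -
  have "(\<lambda>i. act ((\<Sum>j<N. blk d B i j * h j) + bb d \<beta> i)) = blkval d B \<beta> h"
  proof
    fix i
    show "act ((\<Sum>j<N. blk d B i j * h j) + bb d \<beta> i) = blkval d B \<beta> h i"
    proof (cases "i < 4*d")
      case True then show ?thesis using blk_sum[OF assms True] by (simp add: blkval_def bb_def)
    next
      case False
      then have "blk d B i j = 0" for j by (simp add: blk_def)
      then show ?thesis using False by (simp add: blkval_def bb_def)
    qed
  qed
  then show ?thesis by simp
qed

lemma blkval_at: "q < d \<Longrightarrow> r < 4 \<Longrightarrow>
  blkval d B \<beta> h (4*q+r) = act ((\<Sum>r'<4. B r r' * h (4*q + r')) + \<beta> r)"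
  by (simp add: blkval_def)




definition Ppoly :: "nat \<Rightarrow> (nat \<Rightarrow> int) \<Rightarrow> real poly" where
  "Ppoly J r = (\<Sum>m<J. smult (of_int (r m)) (\<Prod>i\<in>{..<J}-{m}. [:of_nat i + 1, 1:]))"

lemma poly_Ppoly: "poly (Ppoly J r) x = (\<Sum>m<J. of_int (r m) * (\<Prod>i\<in>{..<J}-{m}. (of_nat i + 1 + x)))"
  by (simp add: Ppoly_def poly_sum poly_prod)

lemma Ppoly_nonzero:
  assumes "m0 < J" "r m0 \<noteq> 0"
  shows "Ppoly J r \<noteq> 0"
proof
  assume "Ppoly J r = 0"
  then have z: "poly (Ppoly J r) (- (of_nat m0 + 1)) = 0" by simp
  have "poly (Ppoly J r) (- (of_nat m0 + 1)) =
     (\<Sum>m<J. if m = m0 then of_int (r m0) * (\<Prod>i\<in>{..<J}-{m0}. (of_nat i + 1 + (- (of_nat m0 + 1)))) else 0)"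
    unfolding poly_Ppoly
  proof (intro sum.cong refl)
    fix m assume m: "m \<in> {..<J}"
    show "of_int (r m) * (\<Prod>i\<in>{..<J}-{m}. (of_nat i + 1 + (- (of_nat m0 + 1)))) =
      (if m = m0 then of_int (r m0) * (\<Prod>i\<in>{..<J}-{m0}. (of_nat i + 1 + (- (of_nat m0 + 1)))) else (0::real))"
    proof (cases "m = m0")
      case False
      then have "m0 \<in> {..<J}-{m}" using assms by auto
      then have "(\<Prod>i\<in>{..<J}-{m}. (of_nat i + 1 + (- (of_nat m0 + 1)))) = (0::real)"
        by (intro prod_zero) auto
      then show ?thesis using False by simp
    qed simp
  qed
  also have "\<dots> = of_int (r m0) * (\<Prod>i\<in>{..<J}-{m0}. (of_nat i + 1 + (- (of_nat m0 + 1))))"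
    using assms by (simp add: sum.delta)
  finally have "of_int (r m0) * (\<Prod>i\<in>{..<J}-{m0}. (of_nat i + 1 + (- (of_nat m0 + 1)))) = (0::real)"
    using z by simp
  moreover have "(\<Prod>i\<in>{..<J}-{m0}. (of_nat i + 1 + (- (of_nat m0 + 1)))) \<noteq> (0::real)"
    by (subst prod_zero_iff) auto
  ultimately show False using assms by simp
qed

lemma Ppoly_eval:
  assumes "c > 0"
  shows "poly (Ppoly J r) c = (\<Sum>m<J. of_int (r m) / (of_nat m + c + 1)) * (\<Prod>i<J. (of_nat i + 1 + c))"
proof -
  have "(\<Sum>m<J. of_int (r m) / (of_nat m + c + 1)) * (\<Prod>i<J. (of_nat i + 1 + c))
     = (\<Sum>m<J. of_int (r m) / (of_nat m + c + 1) * (\<Prod>i<J. (of_nat i + 1 + c)))"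
    by (simp add: sum_distrib_right)
  also have "\<dots> = (\<Sum>m<J. of_int (r m) * (\<Prod>i\<in>{..<J}-{m}. (of_nat i + 1 + c)))"
  proof (intro sum.cong refl)
    fix m assume "m \<in> {..<J}"
    then have "(\<Prod>i<J. (of_nat i + 1 + c)) = (of_nat m + 1 + c) * (\<Prod>i\<in>{..<J}-{m}. (of_nat i + 1 + c))"
      by (simp add: prod.remove)
    moreover have "of_nat m + 1 + c \<noteq> 0" using assms by (simp add: add_pos_pos)
    ultimately show "of_int (r m) / (of_nat m + c + 1) * (\<Prod>i<J. (of_nat i + 1 + c)) =
        of_int (r m) * (\<Prod>i\<in>{..<J}-{m}. (of_nat i + 1 + c))"
      by (simp add: field_simps)
  qed
  finally show ?thesis by (simp add: poly_Ppoly)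
qed

definition restr :: "nat \<Rightarrow> int list \<Rightarrow> nat \<Rightarrow> int" where
  "restr J xs m = (if m < J then xs ! m else 0)"

lemma restr_surj: "\<exists>xs. \<forall>m<J. restr J xs m = r m"
  by (rule exI[of _ "map r [0..<J]"]) (simp add: restr_def)

lemma exists_good_c:
  "\<exists>c::real>0. \<forall>r :: nat \<Rightarrow> int. (\<Sum>m<J. of_int (r m) / (of_nat m + c + 1)) = 0 \<longrightarrow> (\<forall>m<J. r m = 0)"
proof -
  define Bad where "Bad = (\<Union>xs\<in>{xs. \<exists>m<J. restr J xs m \<noteq> 0}. {x. poly (Ppoly J (restr J xs)) x = 0})"
  have "countable Bad"
    unfolding Bad_def
  proof (intro countable_UN)
    show "countable {xs :: int list. \<exists>m<J. restr J xs m \<noteq> 0}" by simp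
    fix xs assume "xs \<in> {xs. \<exists>m<J. restr J xs m \<noteq> 0}"
    then obtain m0 where "m0 < J" "restr J xs m0 \<noteq> 0" by auto
    then show "countable {x. poly (Ppoly J (restr J xs)) x = 0}"
      using Ppoly_nonzero poly_roots_finite countable_finite by blast
  qed
  moreover have "uncountable {0<..<1::real}" using uncountable_open_interval[of 0 1] by simp
  ultimately obtain c where c: "c \<in> {0<..<1::real}" "c \<notin> Bad"
    by (metis countable_subset subsetI)
  show ?thesis
  proof (intro exI[of _ c] conjI allI impI)
    show "c > 0" using c by simp
    fix r :: "nat \<Rightarrow> int" and m
    assume sum0: "(\<Sum>m<J. of_int (r m) / (of_nat m + c + 1)) = 0" and m: "m < J"
    show "r m = 0"
    proof (rule ccontr)
      assume "r m \<noteq> 0"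
      obtain xs where xs: "\<forall>m<J. restr J xs m = r m" using restr_surj by blast
      have "(\<Sum>m<J. of_int (restr J xs m) / (of_nat m + c + 1)) = (\<Sum>m<J. of_int (r m) / (of_nat m + c + 1))"
        using xs by (intro sum.cong) auto
      then have "poly (Ppoly J (restr J xs)) c = 0"
        using Ppoly_eval[of c J "restr J xs"] sum0 \<open>c > 0\<close> by simp
      moreover have "xs \<in> {xs. \<exists>m<J. restr J xs m \<noteq> 0}" using xs m \<open>r m \<noteq> 0\<close> by auto
      ultimately have "c \<in> Bad" unfolding Bad_def by blast
      then show False using c by simp
    qed
  qed
qed

lemma kron_values:
  fixes y :: "nat \<Rightarrow> real"
  assumes y: "\<And>m. m < J \<Longrightarrow> 0 \<le> y m \<and> y m \<le> 1" and "0 < \<epsilon>" "\<epsilon> \<le> 1"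
  obtains c t and Z :: int where "c > 0"
    "\<And>m. m < J \<Longrightarrow> 0 \<le> 2 * t * (1 / (of_nat m + c + 1)) + 2 * of_int Z"
    "\<And>m. m < J \<Longrightarrow> \<bar>sigma1 (2 * t * (1 / (of_nat m + c + 1)) + 2 * of_int Z) - y m\<bar> < \<epsilon>"
proof -
  obtain c :: real where c: "c > 0"
    and good: "\<And>r :: nat \<Rightarrow> int. (\<Sum>m<J. of_int (r m) / (of_nat m + c + 1)) = 0 \<Longrightarrow> (\<forall>m<J. r m = 0)"
    using exists_good_c[of J] by blast
  define \<theta> where "\<theta> = (\<lambda>m::nat. 1 / (of_nat m + c + 1))"
  have inj: "inj_on \<theta> {..<J}"
    unfolding \<theta>_def inj_on_def using c by (auto simp: field_simps)
  interpret Modules.module "(\<lambda>r. (*) (real_of_int r))"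
    by (simp add: Modules.module.intro distrib_left mult.commute)
  have indep: "independent (\<theta> ` {..<J})"
    unfolding independent_explicit_module
  proof (intro allI impI)
    fix T u v
    assume T: "finite T" "T \<subseteq> \<theta> ` {..<J}" and s0: "(\<Sum>v\<in>T. real_of_int (u v) * v) = 0" and v: "v \<in> T"
    define r where "r = (\<lambda>m. if \<theta> m \<in> T then u (\<theta> m) else 0)"
    define A where "A = {m \<in> {..<J}. \<theta> m \<in> T}"
    have TA: "T = \<theta> ` A" using T unfolding A_def by auto
    have injA: "inj_on \<theta> A" using inj unfolding A_def by (auto intro: inj_on_subset)
    have "(\<Sum>m<J. of_int (r m) / (of_nat m + c + 1)) = (\<Sum>m<J. if \<theta> m \<in> T then real_of_int (u (\<theta> m)) * \<theta> m else 0)"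
      unfolding r_def \<theta>_def by (intro sum.cong) auto
    also have "\<dots> = (\<Sum>m\<in>A. real_of_int (u (\<theta> m)) * \<theta> m)"
      unfolding A_def by (rule sum.inter_filter[symmetric]) simp
    also have "\<dots> = (\<Sum>v\<in>T. real_of_int (u v) * v)"
      unfolding TA using sum.reindex[OF injA, of "\<lambda>v. real_of_int (u v) * v"] by simp
    finally have "\<forall>m<J. r m = 0" using good s0 by simp
    moreover obtain m where "m < J" "v = \<theta> m" using v T by auto
    ultimately show "u v = 0" using v unfolding r_def by auto
  qed
  obtain t h where th: "\<And>i. i < J \<Longrightarrow> \<bar>t * \<theta> i - of_int (h i) - y i / 2\<bar> < \<epsilon> / 2"
    using Kronecker_thm_1[of \<theta> J "\<epsilon>/2" "\<lambda>i. y i / 2"] indep inj \<open>\<epsilon> > 0\<close> by auto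
  define Z where "Z = \<lceil>\<bar>t\<bar>\<rceil>"
  have th01: "0 < \<theta> m \<and> \<theta> m \<le> 1" for m
    unfolding \<theta>_def using c by (simp add: field_simps)
  have pos: "0 \<le> 2 * t * \<theta> m + 2 * of_int Z" for m
  proof -
    have "\<bar>t * \<theta> m\<bar> \<le> \<bar>t\<bar>" using th01[of m] by (simp add: abs_mult mult_left_le)
    moreover have "\<bar>t\<bar> \<le> of_int Z" unfolding Z_def by linarith
    ultimately show ?thesis by linarith
  qed
  show ?thesis
  proof (rule that[of c t Z])
    show "c > 0" by (rule c)
    fix m assume m: "m < J"
    show "0 \<le> 2 * t * (1 / (of_nat m + c + 1)) + 2 * of_int Z" using pos[of m] by (simp add: \<theta>_def)
    define e where "e = 2 * t * \<theta> m - 2 * of_int (h m) - y m"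
    have e: "\<bar>e\<bar> < \<epsilon>" using th[OF m] unfolding e_def by linarith
    have "2 * t * \<theta> m + 2 * of_int Z = (y m + e) + 2 * of_int (h m + Z)"
      unfolding e_def by simp
    then have "sigma1 (2 * t * \<theta> m + 2 * of_int Z) = sigma1 (y m + e)"
      using sigma1_period[of "y m + e" "h m + Z"] by (simp only:)
    moreover have "\<bar>sigma1 (y m + e) - y m\<bar> \<le> \<bar>e\<bar>"
      using sigma1_near[of "y m" e] y[OF m] e \<open>\<epsilon> \<le> 1\<close> by simp
    ultimately show "\<bar>sigma1 (2 * t * (1 / (of_nat m + c + 1)) + 2 * of_int Z) - y m\<bar> < \<epsilon>"
      using e by (simp add: \<theta>_def)
  qed
qed




lemma digits_bound:
  assumes "\<And>q. q < d \<Longrightarrow> a q < K"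
  shows "(\<Sum>q<d. a q * K^q) < (K::nat)^d"
  using assms
proof (induction d)
  case 0 then show ?case by simp
next
  case (Suc d)
  have "(\<Sum>q<Suc d. a q * K^q) = (\<Sum>q<d. a q * K^q) + a d * K^d" by simp
  also have "\<dots> < K^d + a d * K^d" using Suc by simp
  also have "\<dots> = (a d + 1) * K^d" by simp
  also have "\<dots> \<le> K * K^d" using Suc.prems[of d] by (intro mult_right_mono) auto
  finally show ?case by simp
qed

lemma digits_eq:
  assumes "\<And>q. q < d \<Longrightarrow> a q < K" "i < d"
  shows "(\<Sum>q<d. a q * K^q) div K^i mod K = (a i :: nat)"
  using assms
proof (induction d)
  case 0 then show ?case by simp
next
  case (Suc d)
  have S: "(\<Sum>q<Suc d. a q * K^q) = (\<Sum>q<d. a q * K^q) + a d * K^d" by simp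
  have bnd: "(\<Sum>q<d. a q * K^q) < K^d" using Suc.prems(1) by (intro digits_bound) auto
  show ?case
  proof (cases "i = d")
    case True
    have "K > 0" using Suc.prems(1)[of d] by simp
    have "((\<Sum>q<d. a q * K^q) + a d * K^d) div K^d = a d"
      using bnd \<open>K > 0\<close> by simp
    moreover from \<open>K > 0\<close> have "((\<Sum>q<d. a q * K^q) + a d * K^d) div K^d = (\<Sum>q<d. a q * K^q) div K^d + a d"
      by simp
    ultimately show ?thesis using True S Suc.prems(1)[of d] by simp
  next
    case False
    then have i: "i < d" using Suc.prems by simp
    have K0: "K > 0" using Suc.prems(1)[of d] by simp
    have "K^d = K^i * (K * K^(d - i - 1))" using i
      by (metis Suc_diff_Suc diff_Suc_1 power_Suc power_add le_add_diff_inverse less_imp_le_nat)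
    then have ad: "a d * K^d = K^i * (K * (a d * K^(d - i - 1)))" by (simp add: ac_simps)
    have "((\<Sum>q<d. a q * K^q) + K^i * (K * (a d * K^(d - i - 1)))) div K^i = (\<Sum>q<d. a q * K^q) div K^i + K * (a d * K^(d - i - 1))"
      using K0 by simp
    then have "((\<Sum>q<d. a q * K^q) + a d * K^d) div K^i = (\<Sum>q<d. a q * K^q) div K^i + K * (a d * K^(d - i - 1))"
      by (simp only: ad)
    then have "((\<Sum>q<d. a q * K^q) + a d * K^d) div K^i mod K = (\<Sum>q<d. a q * K^q) div K^i mod K"
      by simp
    then show ?thesis using S Suc i by simp
  qed
qed

lemma sigma1_B_even:
  assumes "0 < \<eta>" "\<eta> \<le> f" "f \<le> 1 - \<eta>"
  shows "1/2 + \<eta> \<le> sigma1 (f + 1/2) \<and> sigma1 (f + 1/2) \<le> 1"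
proof (cases "f + 1/2 \<le> 1")
  case True then show ?thesis using assms sigma1_01[of "f+1/2"] by simp
next
  case False then show ?thesis using assms sigma1_12[of "f+1/2"] by simp
qed

lemma sigma1_B_odd:
  assumes "0 < \<eta>" "\<eta> \<le> f" "f \<le> 1 - \<eta>"
  shows "0 \<le> sigma1 (3/2 + f) \<and> sigma1 (3/2 + f) \<le> 1/2 - \<eta>"
proof (cases "3/2 + f \<le> 2")
  case True then show ?thesis using assms sigma1_12[of "3/2+f"] by simp
next
  case False
  have "sigma1 (3/2 + f) = sigma1 ((f - 1/2) + 2 * of_int 1)" by simp
  also have "\<dots> = sigma1 (f - 1/2)" by (rule sigma1_period)
  also have "\<dots> = f - 1/2" using False assms by (intro sigma1_01) auto
  finally show ?thesis using False assms by simp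
qed

lemma quant:
  fixes s \<eta> :: real
  assumes "0 \<le> s" "0 < \<eta>" "\<eta> \<le> frac s" "frac s \<le> 1 - \<eta>"
  defines "\<Lambda> \<equiv> 1 / (2 * \<eta>)"
  defines "\<Lambda>' \<equiv> \<Lambda> + 1"
  defines "A \<equiv> act s" and "B \<equiv> act (s + 1/2)"
  defines "E1 \<equiv> act (\<Lambda> / \<Lambda>' * B + ((1/2 - \<Lambda>/2) / \<Lambda>' + 1))"
  defines "E2 \<equiv> act (\<Lambda> / \<Lambda>' * B + ((-1/2 - \<Lambda>/2) / \<Lambda>' + 1))"
  shows "act (- act A + (- \<Lambda>' / 2) * E1 + (\<Lambda>' / 2) * E2 + 3/2) = frac s"
proof -
  define f where "f = frac s"
  define n where "n = \<lfloor>s\<rfloor>"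
  have s: "s = of_int n + f" unfolding f_def n_def by (simp add: frac_def)
  have f01: "0 \<le> f" "f < 1" unfolding f_def by (auto simp: frac_lt_1)
  have L0: "\<Lambda> > 0" unfolding \<Lambda>_def using assms(2) by auto
  then have Lpos: "\<Lambda> > 0" "\<Lambda>' > 0" unfolding \<Lambda>'_def by auto
  define z where "z = \<Lambda> * (B - 1/2) + 1/2"
  have cases: "(A = f \<and> 1/2 + \<eta> \<le> B \<and> B \<le> 1) \<or> (A = 1 - f \<and> 0 \<le> B \<and> B \<le> 1/2 - \<eta>)"
  proof (cases "even n")
    case True
    then obtain j where j: "n = 2 * j" by (auto elim: evenE)
    have "A = sigma1 (f + 2 * of_int j)" unfolding A_def using s j assms(1) by (simp add: act_pos add.commute)
    also have "\<dots> = f" using f01 by (simp add: sigma1_period sigma1_01)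
    finally have "A = f" .
    moreover have "B = sigma1 ((f + 1/2) + 2 * of_int j)" unfolding B_def using s j assms(1)
      by (simp add: act_pos add_ac)
    then have "B = sigma1 (f + 1/2)" by (simp only: sigma1_period)
    ultimately show ?thesis using sigma1_B_even[of \<eta> f] assms f_def by simp
  next
    case False
    then obtain j where j: "n = 2 * j + 1" by (auto elim: oddE)
    have "A = sigma1 ((1 + f) + 2 * of_int j)" unfolding A_def using s j assms(1) by (simp add: act_pos add_ac)
    also have "\<dots> = sigma1 (1 + f)" by (simp only: sigma1_period)
    also have "\<dots> = 1 - f" using f01 by (subst sigma1_12) auto
    finally have "A = 1 - f" .
    moreover have "B = sigma1 ((3/2 + f) + 2 * of_int j)" unfolding B_def using s j assms(1)
      by (simp add: act_pos add_ac)
    then have "B = sigma1 (3/2 + f)" by (simp only: sigma1_period)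
    ultimately show ?thesis using sigma1_B_odd[of \<eta> f] assms f_def by simp
  qed
  then have B01: "0 \<le> B" "B \<le> 1" using assms(2) by auto
  have "\<Lambda> * B \<le> \<Lambda> * 1" using B01 Lpos by (intro mult_left_mono) auto
  moreover have "0 \<le> \<Lambda> * B" using B01 Lpos by simp
  ultimately have zb: "\<bar>z\<bar> \<le> \<Lambda>'" "\<bar>z - 1\<bar> \<le> \<Lambda>'"
    unfolding z_def \<Lambda>'_def by (auto simp: abs_le_iff algebra_simps)
  have e1: "\<Lambda> / \<Lambda>' * B + ((1/2 - \<Lambda>/2) / \<Lambda>' + 1) = z / \<Lambda>' + 1"
    unfolding z_def using Lpos by (simp add: field_simps)
  have e2: "\<Lambda> / \<Lambda>' * B + ((-1/2 - \<Lambda>/2) / \<Lambda>' + 1) = (z - 1) / \<Lambda>' + 1"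
    unfolding z_def using Lpos by (simp add: field_simps)
  have "E1 = 1 - \<bar>z / \<Lambda>'\<bar>" unfolding E1_def e1
    using zb Lpos by (intro act_abs) (auto simp: abs_le_iff field_simps)
  then have E1: "E1 = 1 - \<bar>z\<bar> / \<Lambda>'" using Lpos by simp
  have "E2 = 1 - \<bar>(z - 1) / \<Lambda>'\<bar>" unfolding E2_def e2
    using zb Lpos by (intro act_abs) (auto simp: abs_le_iff field_simps)
  then have E2: "E2 = 1 - \<bar>z - 1\<bar> / \<Lambda>'" using Lpos by simp
  have inp: "- act A + (- \<Lambda>' / 2) * E1 + (\<Lambda>' / 2) * E2 + 3/2 = (\<bar>z\<bar> - \<bar>z - 1\<bar> + 1) / 2 - A + 1"
  proof -
    have "act A = A" using cases f01 by (auto intro: act_id)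
    then show ?thesis unfolding E1 E2 using Lpos by (simp add: field_simps)
  qed
  have L\<eta>: "\<Lambda> * \<eta> = 1/2" unfolding \<Lambda>_def using assms(2) by simp
  from cases show ?thesis
  proof
    assume h: "A = f \<and> 1/2 + \<eta> \<le> B \<and> B \<le> 1"
    have "\<Lambda> * (B - 1/2) \<ge> \<Lambda> * \<eta>" using h Lpos by (intro mult_left_mono) auto
    then have "z \<ge> 1" unfolding z_def using L\<eta> by simp
    then have "(\<bar>z\<bar> - \<bar>z - 1\<bar> + 1) / 2 - A + 1 = (1 - f) + 1" using h by simp
    moreover have "act ((1 - f) + 1) = 1 - \<bar>1 - f\<bar>" using f01 by (intro act_abs) auto
    ultimately show ?thesis unfolding inp f_def using f01 f_def by simp
  next
    assume h: "A = 1 - f \<and> 0 \<le> B \<and> B \<le> 1/2 - \<eta>"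
    have "\<Lambda> * (1/2 - B) \<ge> \<Lambda> * \<eta>" using h Lpos by (intro mult_left_mono) auto
    then have "z \<le> 0" unfolding z_def using L\<eta> by (simp add: algebra_simps)
    then have "(\<bar>z\<bar> - \<bar>z - 1\<bar> + 1) / 2 - A + 1 = (f - 1) + 1" using h by simp
    moreover have "act ((f - 1) + 1) = 1 - \<bar>f - 1\<bar>" using f01 by (intro act_abs) auto
    ultimately show ?thesis unfolding inp f_def using f01 f_def by simp
  qed
qed




definition row_layer :: "(nat \<Rightarrow> real) \<Rightarrow> real \<Rightarrow> (nat \<Rightarrow> nat \<Rightarrow> real) \<times> (nat \<Rightarrow> real)" where
  "row_layer w b = ((\<lambda>i j. if i = 0 then w j else 0), (\<lambda>i. if i = 0 then b else 0))"

lemma row_layer_step: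
  "hidden_layers N (row_layer w b # ls) h =
     hidden_layers N ls (\<lambda>i. if i = 0 then act ((\<Sum>j<N. w j * h j) + b) else 0)"
proof -
  have eq: "(\<lambda>i. act ((\<Sum>j<N. (if i = 0 then w j else 0) * h j) + (if i = 0 then b else 0)))
     = (\<lambda>i. if i = 0 then act ((\<Sum>j<N. w j * h j) + b) else 0)"
    by (rule ext) simp
  show ?thesis unfolding row_layer_def hidden_layers.simps by (simp only: eq)
qed

lemma sum4: "(\<Sum>r<(4::nat). F r) = F 0 + F 1 + F 2 + (F 3 :: real)"
  by (simp add: numeral_eq_Suc)

lemma vec_nth_meas: "(\<lambda>x::real^'n. x $ k) \<in> borel_measurable borel"
  by (intro borel_measurable_continuous_onI continuous_intros)




lemma lin_aux:
  fixes D K u a :: real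
  assumes "D \<noteq> 0" "K \<noteq> 0"
  shows "K / D * u + - K * a / D = K * (u - a) / D"
    "K / D * u + (- K * a / D + 1/2) = K * (u - a) / D + 1/2"
    "1 / D * u + - a / D = K * (u - a) / D / K"
  using assms by (simp_all add: field_simps)

lemma net_exists:
  fixes a b \<eta> c t M :: real and Z :: int and K N L :: nat and \<iota> :: "'n::finite \<Rightarrow> nat"
  assumes \<iota>: "bij_betw \<iota> UNIV {..<CARD('n)}" and ab: "a < b" and K: "K \<ge> 1" and \<eta>: "0 < \<eta>"
    and c: "c > 0" and M: "M > 0" and N: "4 * CARD('n) \<le> N" and L: "5 \<le> L"
  shows "\<exists>\<phi> \<in> NN_class N L. \<phi> \<in> borel_measurable borel \<and> (\<forall>x. \<bar>\<phi> x\<bar> \<le> 3 * M) \<and>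
    (\<forall>x \<in> cube a b. (\<forall>k. \<eta> \<le> frac (real K * (x$k - a) / (b - a)) \<and> frac (real K * (x$k - a) / (b - a)) \<le> 1 - \<eta>) \<longrightarrow>
       0 \<le> 2 * t * (1 / ((\<Sum>k\<in>UNIV. real K ^ \<iota> k * of_int \<lfloor>real K * (x$k - a) / (b - a)\<rfloor>) + c + 1)) + 2 * of_int Z \<longrightarrow>
       \<phi> x = 2 * M * sigma1 (2 * t * (1 / ((\<Sum>k\<in>UNIV. real K ^ \<iota> k * of_int \<lfloor>real K * (x$k - a) / (b - a)\<rfloor>) + c + 1)) + 2 * of_int Z) - M)"
proof -
  define d where "d = CARD('n)"
  define \<kappa> where "\<kappa> = inv_into UNIV \<iota>"
  define Kr where "Kr = real K"
  define \<Lambda> where "\<Lambda> = 1 / (2 * \<eta>)"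
  define \<Lambda>' where "\<Lambda>' = \<Lambda> + 1"
  define \<alpha> where "\<alpha> = (\<lambda>r::nat. if r = 0 \<or> r = 1 then Kr / (b - a) else if r = 2 then 1 / (b - a) else 0)"
  define \<beta>1 where "\<beta>1 = (\<lambda>r::nat. if r = 0 then - Kr * a / (b - a) else if r = 1 then - Kr * a / (b - a) + 1/2
                       else if r = 2 then - a / (b - a) else 0)"
  define B2 where "B2 = (\<lambda>(r::nat) (r'::nat). if r = 0 \<and> r' = 0 then 1 else if r = 1 \<and> r' = 1 then \<Lambda> / \<Lambda>'
                       else if r = 2 \<and> r' = 2 then 1 else if r = 3 \<and> r' = 1 then \<Lambda> / \<Lambda>' else (0::real))"
  define \<beta>2 where "\<beta>2 = (\<lambda>r::nat. if r = 1 then (1/2 - \<Lambda>/2) / \<Lambda>' + 1 else if r = 3 then (-1/2 - \<Lambda>/2) / \<Lambda>' + 1 else 0)"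
  define B3 where "B3 = (\<lambda>(r::nat) (r'::nat). if r = 0 then (if r' = 0 then -1 else if r' = 1 then - \<Lambda>' / 2 else if r' = 3 then \<Lambda>' / 2 else 0)
                       else if r = 1 \<and> r' = 2 then 1 else (0::real))"
  define \<beta>3 where "\<beta>3 = (\<lambda>r::nat. if r = 0 then 3/2 else (0::real))"
  define w4 where "w4 = (\<lambda>j::nat. if j < 4 * d then (if j mod 4 = 0 then Kr ^ (j div 4) else if j mod 4 = 1 then - (Kr * Kr ^ (j div 4)) else 0) else 0)"
  define Ws where "Ws = [(blk d B2, bb d \<beta>2), (blk d B3, bb d \<beta>3), row_layer w4 (- c), one_layer (2 * t) (2 * t + 2 * of_int Z)]
                        @ replicate (L - 5) (one_layer 1 0)"
  define W0 where "W0 = (\<lambda>(i::nat) (k::'n). if i < 4 * d \<and> i div 4 = \<iota> k then \<alpha> (i mod 4) else 0)"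
  define c0 where "c0 = bb d \<beta>1"
  define v where "v = (\<lambda>j::nat. if j = 0 then 2 * M else 0)"
  define h1 where "h1 = (\<lambda>x::real^'n. \<lambda>i. act ((\<Sum>k\<in>UNIV. W0 i k * x $ k) + c0 i))"
  define \<phi> where "\<phi> = (\<lambda>x. (\<Sum>j<N. v j * hidden_layers N Ws (h1 x) j) + (- M))"
  have N0: "0 < N" using N by (simp add: d_def[symmetric]) (metis N d_def gr0I mult_is_0 not_numeral_le_zero le_0_eq zero_less_card_finite)
  have lenWs: "length Ws = L - 1" unfolding Ws_def using L by simp
  have Wsne: "Ws \<noteq> []" unfolding Ws_def by simp
  have vsum: "(\<Sum>j<N. v j * H j) = 2 * M * H 0" for H
    unfolding v_def using N0 by (simp add: if_distrib[where f="\<lambda>z. z * _"] sum.delta cong: if_cong)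
  have phi_eq: "\<phi> x = 2 * M * hidden_layers N Ws (h1 x) 0 - M" for x
    unfolding \<phi>_def vsum by simp
  have inNN: "\<phi> \<in> NN_class N L"
    unfolding NN_class_def
    apply (rule CollectI)
    apply (rule exI[of _ W0], rule exI[of _ c0], rule exI[of _ Ws], rule exI[of _ v], rule exI[of _ "- M"])
    using lenWs unfolding \<phi>_def h1_def by simp
  have meas: "\<phi> \<in> borel_measurable borel"
  proof -
    have "(\<lambda>x. h1 x i) \<in> borel_measurable borel" for i
      unfolding h1_def using vec_nth_meas by measurable
    then have "(\<lambda>x. hidden_layers N Ws (h1 x) 0) \<in> borel_measurable borel"
      by (rule hidden_layers_meas)
    then show ?thesis unfolding phi_eq by measurable
  qed
  have bound: "\<bar>\<phi> x\<bar> \<le> 3 * M" for x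
  proof -
    have "\<bar>hidden_layers N Ws (h1 x) 0\<bar> \<le> 1" using hidden_layers_bound[OF Wsne] .
    then have "\<bar>2 * M * hidden_layers N Ws (h1 x) 0\<bar> \<le> 2 * M" using M by (simp add: abs_mult)
    then show ?thesis unfolding phi_eq using M by linarith
  qed
  have inj\<iota>: "inj \<iota>" using \<iota> by (simp add: bij_betw_def)
  have \<kappa>\<iota>: "\<kappa> (\<iota> k) = k" for k unfolding \<kappa>_def using inj\<iota> by simp
  have \<iota>\<kappa>: "\<iota> (\<kappa> q) = q" if "q < d" for q
  proof -
    have "q \<in> range \<iota>" using \<iota> that unfolding d_def bij_betw_def by auto
    then show ?thesis unfolding \<kappa>_def by (simp add: f_inv_into_f)
  qed
  have \<iota>iff: "\<iota> k = q \<longleftrightarrow> k = \<kappa> q" if "q < d" for k q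
    using \<kappa>\<iota> \<iota>\<kappa>[OF that] by auto
  have h1_val: "h1 x (4*q + r) = act (\<alpha> r * x$(\<kappa> q) + \<beta>1 r)" if "q < d" "r < 4" for x q r
  proof -
    have i: "4*q + r < 4*d" "(4*q+r) div 4 = q" "(4*q+r) mod 4 = r" using that by auto
    have "(\<Sum>k\<in>UNIV. W0 (4*q+r) k * x $ k) = (\<Sum>k\<in>UNIV. if k = \<kappa> q then \<alpha> r * x $ k else 0)"
    proof (intro sum.cong refl)
      fix k
      show "W0 (4*q+r) k * x $ k = (if k = \<kappa> q then \<alpha> r * x $ k else 0)"
      proof (cases "k = \<kappa> q")
        case True then show ?thesis unfolding W0_def using i \<iota>\<kappa>[OF that(1)] by simp
      next
        case False then have "\<iota> k \<noteq> q" using \<iota>iff[OF that(1)] by simp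
        then show ?thesis unfolding W0_def using i False by simp
      qed
    qed
    also have "\<dots> = \<alpha> r * x$(\<kappa> q)" by simp
    finally show ?thesis unfolding h1_def c0_def bb_def using i by simp
  qed
  have eval: "\<phi> x = 2 * M * sigma1 (2 * t * (1 / ((\<Sum>k\<in>UNIV. real K ^ \<iota> k * of_int \<lfloor>real K * (x$k - a) / (b - a)\<rfloor>) + c + 1)) + 2 * of_int Z) - M"
    if x: "x \<in> cube a b" and good: "\<forall>k. \<eta> \<le> frac (real K * (x$k - a) / (b - a)) \<and> frac (real K * (x$k - a) / (b - a)) \<le> 1 - \<eta>"
      and argpos: "0 \<le> 2 * t * (1 / ((\<Sum>k\<in>UNIV. real K ^ \<iota> k * of_int \<lfloor>real K * (x$k - a) / (b - a)\<rfloor>) + c + 1)) + 2 * of_int Z"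
    for x
  proof -
    define sq where "sq = (\<lambda>q. Kr * (x$(\<kappa> q) - a) / (b - a))"
    have xab: "a \<le> x$k \<and> x$k \<le> b" for k
      using x unfolding cube_def by (simp add: mem_box_cart)
    have Kr0: "Kr \<ge> 1" unfolding Kr_def using K by simp
    have sqb: "0 \<le> sq q \<and> sq q \<le> Kr" for q
    proof -
      have "0 \<le> (x$(\<kappa> q) - a) / (b - a)" "(x$(\<kappa> q) - a) / (b - a) \<le> 1"
        using xab[of "\<kappa> q"] ab by auto
      then show ?thesis unfolding sq_def using Kr0
        by (auto simp: mult_le_cancel_left1 times_divide_eq_right[symmetric] simp del: times_divide_eq_right)
    qed
    have sqf: "\<eta> \<le> frac (sq q) \<and> frac (sq q) \<le> 1 - \<eta>" for q
      using good[rule_format, of "\<kappa> q"] unfolding sq_def Kr_def by simp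
    have in1: "\<alpha> 0 * x$(\<kappa> q) + \<beta>1 0 = sq q" "\<alpha> 1 * x$(\<kappa> q) + \<beta>1 1 = sq q + 1/2"
      "\<alpha> 2 * x$(\<kappa> q) + \<beta>1 2 = sq q / Kr" "\<alpha> 3 * x$(\<kappa> q) + \<beta>1 3 = 0" for q
    proof -
      have ba: "b - a \<noteq> 0" "Kr \<noteq> 0" using ab Kr0 by auto
      show "\<alpha> 0 * x$(\<kappa> q) + \<beta>1 0 = sq q" "\<alpha> 1 * x$(\<kappa> q) + \<beta>1 1 = sq q + 1/2"
        "\<alpha> 2 * x$(\<kappa> q) + \<beta>1 2 = sq q / Kr" "\<alpha> 3 * x$(\<kappa> q) + \<beta>1 3 = 0"
        unfolding \<alpha>_def \<beta>1_def sq_def using lin_aux[OF ba] by simp_all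
    qed
    define h2 where "h2 = blkval d B2 \<beta>2 (h1 x)"
    define h3 where "h3 = blkval d B3 \<beta>3 h2"
    have h2v: "h2 (4*q) = act (act (sq q)) \<and>
        h2 (4*q+1) = act (\<Lambda> / \<Lambda>' * act (sq q + 1/2) + ((1/2 - \<Lambda>/2) / \<Lambda>' + 1)) \<and>
        h2 (4*q+2) = act (act (sq q / Kr)) \<and>
        h2 (4*q+3) = act (\<Lambda> / \<Lambda>' * act (sq q + 1/2) + ((-1/2 - \<Lambda>/2) / \<Lambda>' + 1))" if q: "q < d" for q
    proof -
      have hv: "h1 x (4*q) = act (sq q)" "h1 x (4*q+1) = act (sq q + 1/2)"
          "h1 x (4*q+2) = act (sq q / Kr)" "h1 x (4*q+3) = act 0"
        using h1_val[OF q, of 0 x] h1_val[OF q, of 1 x] h1_val[OF q, of 2 x] h1_val[OF q, of 3 x] in1[of q]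
        by simp_all
      have hvS: "h1 x (Suc (4*q)) = act (sq q + 1/2)" "h1 x (Suc (Suc (4*q))) = act (sq q / Kr)"
        using hv(2,3) by simp_all
      note hv = hv hvS
      have e0: "h2 (4*q) = act (act (sq q))"
        unfolding h2_def using blkval_at[OF q, of 0 B2 \<beta>2 "h1 x"] by (simp add: sum4 B2_def \<beta>2_def hv)
      have e1: "h2 (4*q+1) = act (\<Lambda> / \<Lambda>' * act (sq q + 1/2) + ((1/2 - \<Lambda>/2) / \<Lambda>' + 1))"
        unfolding h2_def using blkval_at[OF q, of 1 B2 \<beta>2 "h1 x"] by (simp add: sum4 B2_def \<beta>2_def hv)
      have e2: "h2 (4*q+2) = act (act (sq q / Kr))"
        unfolding h2_def using blkval_at[OF q, of 2 B2 \<beta>2 "h1 x"] by (simp add: sum4 B2_def \<beta>2_def hv)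
      have e3: "h2 (4*q+3) = act (\<Lambda> / \<Lambda>' * act (sq q + 1/2) + ((-1/2 - \<Lambda>/2) / \<Lambda>' + 1))"
        unfolding h2_def using blkval_at[OF q, of 3 B2 \<beta>2 "h1 x"] by (simp add: sum4 B2_def \<beta>2_def hv)
      show ?thesis using e0 e1 e2 e3 by blast
    qed
    have h3v: "h3 (4*q) = frac (sq q) \<and> h3 (4*q+1) = sq q / Kr" if q: "q < d" for q
    proof -
      have "h3 (4*q) = act (- h2 (4*q) + (- \<Lambda>' / 2) * h2 (4*q+1) + (\<Lambda>' / 2) * h2 (4*q+3) + 3/2)"
        using blkval_at[OF q, of 0 B3 \<beta>3 h2] unfolding h3_def sum4 B3_def \<beta>3_def by simp
      also have "\<dots> = frac (sq q)"
        using h2v[OF q] quant[of "sq q" \<eta>] sqb[of q] sqf[of q] \<eta>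
        unfolding \<Lambda>'_def \<Lambda>_def by simp
      finally have 1: "h3 (4*q) = frac (sq q)" .
      have "h3 (4*q+1) = act (h2 (4*q+2))"
        using blkval_at[OF q, of 1 B3 \<beta>3 h2] unfolding h3_def sum4 B3_def \<beta>3_def by simp
      also have "\<dots> = sq q / Kr" 
        using h2v[OF q] sqb[of q] Kr0 by (simp add: act_id)
      finally show ?thesis using 1 by simp
    qed
    have dN: "4 * d \<le> N" using N unfolding d_def .
    define m where "m = (\<Sum>k\<in>UNIV. real K ^ \<iota> k * of_int \<lfloor>real K * (x$k - a) / (b - a)\<rfloor>)"
    have "(\<Sum>j<N. w4 j * h3 j) = (\<Sum>j<4*d. w4 j * h3 j)"
      using dN by (intro sum.mono_neutral_right) (auto simp: w4_def)
    also have "\<dots> = (\<Sum>q<d. \<Sum>r<4. w4 (4*q+r) * h3 (4*q+r))" by (rule sum_group4)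
    also have "\<dots> = (\<Sum>q<d. - (Kr ^ q * of_int \<lfloor>sq q\<rfloor>))"
    proof (intro sum.cong refl)
      fix q assume "q \<in> {..<d}"
      then have q: "q < d" by simp
      have dm: "(4*q+r) div 4 = q" "(4*q+r) mod 4 = r" "4*q+r < 4*d" if "r < 4" for r
        using q that by auto
      have w: "w4 (4*q) = Kr ^ q" "w4 (4*q+1) = - (Kr * Kr ^ q)" "w4 (4*q+2) = 0" "w4 (4*q+3) = 0"
        unfolding w4_def using dm[of 0] dm[of 1] dm[of 2] dm[of 3] by (simp_all only: if_True if_False) simp_all
      have wS: "w4 (Suc (4*q)) = - (Kr * Kr ^ q)" "w4 (Suc (Suc (4*q))) = 0" using w by simp_all
      have h3S: "h3 (Suc (4*q)) = sq q / Kr" using h3v[OF q] by simp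
      have "(\<Sum>r<4. w4 (4*q+r) * h3 (4*q+r)) = Kr ^ q * frac (sq q) - Kr * Kr ^ q * (sq q / Kr)"
        unfolding sum4 using w wS h3v[OF q] h3S by simp
      also have "\<dots> = - (Kr ^ q * of_int \<lfloor>sq q\<rfloor>)"
        using Kr0 by (simp add: frac_def algebra_simps)
      finally show "(\<Sum>r<4. w4 (4*q+r) * h3 (4*q+r)) = - (Kr ^ q * of_int \<lfloor>sq q\<rfloor>)" .
    qed
    also have "\<dots> = - (\<Sum>q<d. Kr ^ q * of_int \<lfloor>sq q\<rfloor>)" by (simp add: sum_negf)
    also have "(\<Sum>q<d. Kr ^ q * of_int \<lfloor>sq q\<rfloor>) = m"
    proof -
      have "(\<Sum>k\<in>UNIV. (\<lambda>q. Kr ^ q * of_int \<lfloor>sq q\<rfloor>) (\<iota> k)) = (\<Sum>q\<in>{..<d}. Kr ^ q * of_int \<lfloor>sq q\<rfloor>)"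
        using \<iota> unfolding d_def by (rule sum.reindex_bij_betw)
      moreover have "(\<lambda>q. Kr ^ q * of_int \<lfloor>sq q\<rfloor>) (\<iota> k) = real K ^ \<iota> k * of_int \<lfloor>real K * (x$k - a) / (b - a)\<rfloor>" for k
        unfolding sq_def Kr_def \<kappa>\<iota> by simp
      ultimately show ?thesis unfolding m_def by simp
    qed
    finally have sw: "(\<Sum>j<N. w4 j * h3 j) = - m" .
    have m0: "0 \<le> m"
    proof -
      have "0 \<le> real K ^ \<iota> k * of_int \<lfloor>real K * (x$k - a) / (b - a)\<rfloor>" for k
        using sqb[of "\<iota> k"] unfolding sq_def Kr_def \<kappa>\<iota> by simp
      then show ?thesis unfolding m_def by (intro sum_nonneg) auto
    qed
    have mc: "m + c > 0" using m0 c by simp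
    have H: "act (- m + - c) = - (m + c) / (m + c + 1)"
      using act_neg[OF mc] by (simp add: add.commute)
    define arg where "arg = 2 * t * (1 / (m + c + 1)) + 2 * of_int Z"
    have argpos': "0 \<le> arg" using argpos unfolding arg_def m_def .
    have "2 * t * act (- m + - c) + (2 * t + 2 * of_int Z) = arg"
      unfolding H arg_def using mc by (simp add: field_simps)
    then have Y: "act (2 * t * act (- m + - c) + (2 * t + 2 * of_int Z)) = sigma1 arg"
      using argpos' by (simp add: act_pos)
    have Y01: "0 \<le> sigma1 arg" "sigma1 arg \<le> 1" using sigma1_bounds by auto
    have "hidden_layers N Ws (h1 x) = hidden_layers N ([row_layer w4 (- c), one_layer (2 * t) (2 * t + 2 * of_int Z)]
                        @ replicate (L - 5) (one_layer 1 0)) h3"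
      unfolding Ws_def h3_def h2_def by (simp only: append_Cons append_Nil blk_step[OF dN])
    also have "\<dots> = hidden_layers N (replicate (L - 5) (one_layer 1 0)) (\<lambda>i. if i = 0 then sigma1 arg else 0)"
      by (simp only: append_Cons append_Nil row_layer_step one_layer_step[OF N0] sw simp_thms(6) if_True Y)
    also have "\<dots> = (\<lambda>i. if i = 0 then sigma1 arg else 0)"
      by (rule one_layer_rep[OF N0 Y01])
    finally have "hidden_layers N Ws (h1 x) 0 = sigma1 arg" by simp
    then show ?thesis unfolding phi_eq arg_def m_def by simp
  qed
  show ?thesis
    using inNN meas bound eval by blast
qed




lemma cube_lmeas: "cube a b \<in> lmeasurable"
  unfolding cube_def by simp

lemma cube_sets: "cube a b \<in> sets lebesgue"
  using cube_lmeas fmeasurableD by blast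

lemma hyperplane_null: "{x::real^'n. x $ k = c} \<in> null_sets lebesgue"
proof -
  have "{x::real^'n. x $ k = c} = {x. axis k 1 \<bullet> x = c}" by (auto simp: inner_axis inner_commute)
  moreover have "negligible {x::real^'n. axis k 1 \<bullet> x = c}"
    by (rule negligible_hyperplane) (simp add: axis_eq_0_iff)
  ultimately show ?thesis by (simp add: negligible_iff_null_sets)
qed

lemma frac_meas[measurable]: "(frac :: real \<Rightarrow> real) \<in> borel_measurable borel"
proof -
  have eq: "frac = (\<lambda>x::real. x - real_of_int \<lfloor>x\<rfloor>)" by (auto simp: frac_def)
  have "(\<lambda>x::real. x - real_of_int \<lfloor>x\<rfloor>) \<in> borel_measurable borel" by measurable
  then show ?thesis using eq by simp
qed

lemma bad_small:
  fixes a b e :: real and K :: nat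
  assumes ab: "a < b" and K: "K \<ge> 1" and e: "e > 0"
  shows "\<exists>\<eta>>0. \<eta> \<le> 1/4 \<and> measure (lebesgue_on (cube a b))
      {x \<in> cube a b. \<not> (\<forall>k::'n::finite. \<eta> \<le> frac (real K * (x$k - a) / (b - a)) \<and> frac (real K * (x$k - a) / (b - a)) \<le> 1 - \<eta>)} < e"
proof -
  define s where "s = (\<lambda>(x::real^'n) k. real K * (x$k - a) / (b - a))"
  define A where "A = (\<lambda>n::nat. {x \<in> cube a b. \<exists>k. frac (s x k) < 1 / (real n + 4) \<or> 1 - 1 / (real n + 4) < frac (s x k)})"
  have fm: "finite_measure (lebesgue_on (cube a b))" by (rule finite_measure_lebesgue_on[OF cube_lmeas])
  have smeas: "(\<lambda>x. s x k) \<in> borel_measurable (lebesgue_on (cube a b))" for k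
  proof -
    have "(\<lambda>x. s x k) \<in> borel_measurable borel" unfolding s_def using vec_nth_meas by measurable
    then show ?thesis using measurable_compose[OF id_borel_measurable_lebesgue_on] by (simp add: o_def)
  qed
  have Asets: "A n \<in> sets (lebesgue_on (cube a b))" for n
  proof -
    have "A n = {x \<in> space (lebesgue_on (cube a b)). \<exists>k\<in>UNIV. frac (s x k) < 1 / (real n + 4) \<or> 1 - 1 / (real n + 4) < frac (s x k)}"
      unfolding A_def by (simp add: cube_sets)
    also have "\<dots> \<in> sets (lebesgue_on (cube a b))"
      using smeas by measurable
    finally show ?thesis .
  qed
  have anti: "antimono_on UNIV A"
    unfolding monotone_on_def
  proof (intro allI impI ballI)
    fix n m :: nat assume "n \<le> m"
    then have le: "1 / (real m + 4) \<le> 1 / (real n + 4)" by (simp add: frac_le)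
    show "A m \<le> A n"
    proof
      fix x assume "x \<in> A m"
      then obtain k where "x \<in> cube a b" "frac (s x k) < 1 / (real m + 4) \<or> 1 - 1 / (real m + 4) < frac (s x k)"
        unfolding A_def by blast
      then have "frac (s x k) < 1 / (real n + 4) \<or> 1 - 1 / (real n + 4) < frac (s x k)" using le by linarith
      then show "x \<in> A n" unfolding A_def using \<open>x \<in> cube a b\<close> by blast
    qed
  qed
  have lim: "(\<lambda>n. measure (lebesgue_on (cube a b)) (A n)) \<longlonglongrightarrow> measure (lebesgue_on (cube a b)) (\<Inter>(range A))"
    using finite_measure.finite_Lim_measure_decseq[OF fm _ anti] Asets by auto
  define H where "H = (\<Union>k. \<Union>j::int. {x::real^'n. x $ k = a + real_of_int j * (b - a) / real K})"
  have Hnull: "H \<in> null_sets lebesgue"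
    unfolding H_def using hyperplane_null by (intro null_sets_UN') auto
  have IH: "\<Inter>(range A) \<subseteq> H"
  proof
    fix x assume x: "x \<in> \<Inter>(range A)"
    have "\<exists>k. frac (s x k) = 0"
    proof (rule ccontr)
      assume "\<not> (\<exists>k. frac (s x k) = 0)"
      then have pos: "frac (s x k) > 0" for k using frac_ge_0[of "s x k"] by auto
      define \<mu> where "\<mu> = Min (range (\<lambda>k. min (frac (s x k)) (1 - frac (s x k))))"
      have \<mu>pos: "\<mu> > 0" unfolding \<mu>_def using pos by (simp add: Min_gr_iff frac_lt_1)
      obtain n :: nat where n: "1 / (real n + 4) < \<mu>"
      proof -
        obtain n :: nat where "1 / \<mu> < real n" using reals_Archimedean2 by blast
        then have "1 / (real n + 4) < \<mu>" using \<mu>pos by (simp add: field_simps)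
        then show ?thesis using that by blast
      qed
      have mu: "\<mu> \<le> min (frac (s x k)) (1 - frac (s x k))" for k unfolding \<mu>_def by (intro Min_le) auto
      have "\<not> (frac (s x k) < 1 / (real n + 4) \<or> 1 - 1 / (real n + 4) < frac (s x k))" for k
      proof -
        have "\<mu> \<le> frac (s x k)" "\<mu> \<le> 1 - frac (s x k)" using mu[of k] by auto
        then show ?thesis using n by linarith
      qed
      then have "x \<notin> A n" unfolding A_def by blast
      then show False using x by auto
    qed
    then obtain k where k: "frac (s x k) = 0" by blast
    then have "s x k \<in> \<int>" by (simp add: frac_eq_0_iff)
    then obtain j where j: "s x k = real_of_int j" by (auto elim: Ints_cases)
    have "x $ k = a + real_of_int j * (b - a) / real K"
      using j ab K unfolding s_def by (simp add: field_simps)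
    then show "x \<in> H" unfolding H_def by blast
  qed
  have "measure (lebesgue_on (cube a b)) (\<Inter>(range A)) = measure lebesgue (\<Inter>(range A))"
  proof (rule measure_restrict_space)
    show "cube a b \<inter> space lebesgue \<in> sets lebesgue" using cube_sets by simp
    show "\<Inter>(range A) \<subseteq> cube a b" unfolding A_def by auto
  qed
  also have "\<dots> = 0"
  proof -
    have "\<Inter>(range A) \<in> sets (lebesgue_on (cube a b))"
      using Asets by (intro sets.countable_INT) auto
    moreover have "cube a b \<inter> space lebesgue \<in> sets lebesgue" using cube_sets by simp
    ultimately have "\<Inter>(range A) \<in> sets lebesgue"
      using sets_restrict_space_iff by blast
    then have "\<Inter>(range A) \<in> null_sets lebesgue" using IH Hnull null_sets_subset by blast
    then show ?thesis by (rule measure_eq_0_null_sets)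
  qed
  finally have "(\<lambda>n. measure (lebesgue_on (cube a b)) (A n)) \<longlonglongrightarrow> 0" using lim by simp
  then have "eventually (\<lambda>n. measure (lebesgue_on (cube a b)) (A n) < e) sequentially"
    using e by (rule order_tendstoD)
  then obtain n where n: "measure (lebesgue_on (cube a b)) (A n) < e"
    by (auto dest: eventually_happens)
  show ?thesis
  proof (intro exI[of _ "1 / (real n + 4)"] conjI)
    show "0 < 1 / (real n + 4)" by simp
    show "1 / (real n + 4) \<le> 1/4" by (simp add: field_simps)
    have "{x \<in> cube a b. \<not> (\<forall>k::'n. 1 / (real n + 4) \<le> frac (real K * (x$k - a) / (b - a)) \<and> frac (real K * (x$k - a) / (b - a)) \<le> 1 - 1 / (real n + 4))} = A n"
      unfolding A_def s_def by (auto simp: not_le)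
    then show "measure (lebesgue_on (cube a b)) {x \<in> cube a b. \<not> (\<forall>k::'n. 1 / (real n + 4) \<le> frac (real K * (x$k - a) / (b - a)) \<and> frac (real K * (x$k - a) / (b - a)) \<le> 1 - 1 / (real n + 4))} < e"
      using n by simp
  qed
qed




lemma powr_le_self: "0 \<le> x \<Longrightarrow> x \<le> 1 \<Longrightarrow> 1 \<le> p \<Longrightarrow> x powr p \<le> (x::real)"
proof (cases "x = 0")
  case False
  assume "0 \<le> x" "x \<le> 1" "1 \<le> p"
  then have "x powr p \<le> x powr 1" by (intro powr_mono') auto
  then show ?thesis using False \<open>0 \<le> x\<close> by simp
qed simp

lemma meas_lebesgue_on: "f \<in> borel_measurable borel \<Longrightarrow> f \<in> borel_measurable (lebesgue_on S)"
  using measurable_compose[OF id_borel_measurable_lebesgue_on] by (simp add: o_def)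

lemma cell_index:
  fixes K :: nat and \<iota> :: "'n::finite \<Rightarrow> nat" and F :: "'n \<Rightarrow> int"
  assumes \<iota>: "bij_betw \<iota> UNIV {..<CARD('n)}" and F: "\<And>k. 0 \<le> F k \<and> F k < int K"
  defines "mn \<equiv> (\<Sum>k\<in>UNIV. nat (F k) * K ^ \<iota> k)"
  shows "mn < K ^ CARD('n)" "(\<Sum>k\<in>UNIV. real K ^ \<iota> k * of_int (F k)) = real mn"
    "\<And>k. (mn div K ^ \<iota> k) mod K = nat (F k)"
proof -
  define d where "d = CARD('n)"
  define \<kappa> where "\<kappa> = inv_into UNIV \<iota>"
  have inj\<iota>: "inj \<iota>" using \<iota> by (simp add: bij_betw_def)
  have \<kappa>\<iota>: "\<kappa> (\<iota> k) = k" for k unfolding \<kappa>_def using inj\<iota> by simp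
  define A where "A = (\<lambda>q. nat (F (\<kappa> q)))"
  have A: "A q < K" for q unfolding A_def using F[of "\<kappa> q"] by auto
  have mnA: "mn = (\<Sum>q<d. A q * K ^ q)"
  proof -
    have "(\<Sum>k\<in>UNIV. (\<lambda>q. A q * K ^ q) (\<iota> k)) = (\<Sum>q\<in>{..<d}. A q * K ^ q)"
      using \<iota> unfolding d_def by (rule sum.reindex_bij_betw)
    then show ?thesis unfolding mn_def A_def \<kappa>\<iota> by simp
  qed
  show "mn < K ^ CARD('n)" unfolding mnA d_def[symmetric] using A by (intro digits_bound)
  show "(\<Sum>k\<in>UNIV. real K ^ \<iota> k * of_int (F k)) = real mn"
    unfolding mn_def of_nat_sum using F by (intro sum.cong refl) (simp add: mult.commute)
  fix k
  have "\<iota> k < d" using \<iota> unfolding d_def bij_betw_def by auto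
  then show "(mn div K ^ \<iota> k) mod K = nat (F k)"
    unfolding mnA using digits_eq[of d A K "\<iota> k"] A unfolding A_def \<kappa>\<iota> by simp
qed

lemma cell_aux: "D \<noteq> 0 \<Longrightarrow> K \<noteq> 0 \<Longrightarrow> u - (a + D / K * F) = D / K * (K * (u - a) / D - F)"
  for D K u a F :: real
  by (simp add: field_simps)

lemma net_approx:
  fixes g :: "real^'n::finite \<Rightarrow> real" and a b p \<epsilon> :: real and N L :: nat
  assumes ab: "a < b" and p: "1 \<le> p" and g: "continuous_on UNIV g"
    and N: "4 * CARD('n) \<le> N" and L: "5 \<le> L" and \<epsilon>: "\<epsilon> > 0"
  shows "\<exists>\<phi>\<in>NN_class N L. \<phi> \<in> borel_measurable borel \<and>
     integrable (lebesgue_on (cube a b)) (\<lambda>x. \<bar>\<phi> x - g x\<bar> powr p) \<and>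
     (\<integral>x. \<bar>\<phi> x - g x\<bar> powr p \<partial>lebesgue_on (cube a b)) < \<epsilon>"
proof -
  define S where "S = (cube a b :: (real^'n) set)"
  define \<mu> where "\<mu> = lebesgue_on S"
  define V where "V = measure \<mu> S"
  define d where "d = CARD('n)"
  have fm: "finite_measure \<mu>" unfolding \<mu>_def S_def by (rule finite_measure_lebesgue_on[OF cube_lmeas])
  have sp: "space \<mu> = S" unfolding \<mu>_def by simp
  have V0: "V \<ge> 0" unfolding V_def by simp
  have cS: "compact S" unfolding S_def cube_def by simp
  obtain M where M: "M > 0" "\<And>x. x \<in> S \<Longrightarrow> \<bar>g x\<bar> \<le> M"
  proof -
    have "compact (g ` S)" using cS g by (intro compact_continuous_image) (auto intro: continuous_on_subset)
    then obtain B where B: "B > 0" "\<And>y. y \<in> g ` S \<Longrightarrow> norm y \<le> B"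
      using compact_imp_bounded bounded_pos by metis
    then show ?thesis using that[of B] by auto
  qed
  define \<delta>0 where "\<delta>0 = min 1 (\<epsilon> / (4 * (V + 1)))"
  have \<delta>0: "0 < \<delta>0" "\<delta>0 \<le> 1" "\<delta>0 \<le> \<epsilon> / (4 * (V + 1))" unfolding \<delta>0_def using \<epsilon> V0 by auto
  have uc: "uniformly_continuous_on S g" using cS g by (intro compact_uniformly_continuous) (auto intro: continuous_on_subset)
  obtain \<rho> where \<rho>: "\<rho> > 0" "\<And>x x'. x \<in> S \<Longrightarrow> x' \<in> S \<Longrightarrow> dist x' x < \<rho> \<Longrightarrow> \<bar>g x' - g x\<bar> < \<delta>0 / 2"
    using uc[unfolded uniformly_continuous_on_def, rule_format, of "\<delta>0 / 2"] \<delta>0 by (auto simp: dist_real_def)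
  obtain K :: nat where K: "K \<ge> 1" "real d * (b - a) / real K < \<rho>"
  proof -
    obtain n :: nat where n: "real d * (b - a) / \<rho> < real n" using reals_Archimedean2 by blast
    have "real d * (b - a) / real (n + 1) < \<rho>"
      using n \<rho> ab by (simp add: field_simps)
    then show ?thesis using that[of "n + 1"] by simp
  qed
  obtain \<iota>0 :: "'n \<Rightarrow> nat" where \<iota>0: "bij_betw \<iota>0 UNIV {0..<card (UNIV::'n set)}"
    using ex_bij_betw_finite_nat[of "UNIV :: 'n set"] by auto
  have \<iota>: "bij_betw \<iota>0 UNIV {..<CARD('n)}" using \<iota>0 by (simp add: atLeast0LessThan)
  define J where "J = K ^ d"
  define cor where "cor = (\<lambda>m::nat. (\<chi> k. a + (b - a) / real K * real ((m div K ^ \<iota>0 k) mod K)) :: real^'n)"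
  have corS: "cor m \<in> S" for m
  proof -
    have "a \<le> a + (b - a) / real K * real ((m div K ^ \<iota>0 k) mod K) \<and> a + (b - a) / real K * real ((m div K ^ \<iota>0 k) mod K) \<le> b" for k
    proof -
      have le: "real ((m div K ^ \<iota>0 k) mod K) \<le> real K"
        using K by (simp add: less_imp_le)
      have "(b - a) / real K * real ((m div K ^ \<iota>0 k) mod K) \<le> (b - a) / real K * real K"
        using le ab K by (intro mult_left_mono) auto
      then show ?thesis using ab K by simp
    qed
    then show ?thesis unfolding S_def cube_def cor_def by (simp add: mem_box_cart)
  qed
  define y where "y = (\<lambda>m. (g (cor m) + M) / (2 * M))"
  have y01: "0 \<le> y m \<and> y m \<le> 1" for m
    using M(2)[OF corS[of m]] M(1) unfolding y_def by (auto simp: field_simps abs_le_iff)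
  define \<epsilon>1 where "\<epsilon>1 = min 1 (\<delta>0 / (4 * M))"
  have \<epsilon>1: "0 < \<epsilon>1" "\<epsilon>1 \<le> 1" "2 * M * \<epsilon>1 \<le> \<delta>0 / 2"
    unfolding \<epsilon>1_def using \<delta>0 M by (auto simp: field_simps min_def)
  obtain c t and Z :: int where c: "c > 0"
    and kpos: "\<And>m. m < J \<Longrightarrow> 0 \<le> 2 * t * (1 / (of_nat m + c + 1)) + 2 * of_int Z"
    and kapp: "\<And>m. m < J \<Longrightarrow> \<bar>sigma1 (2 * t * (1 / (of_nat m + c + 1)) + 2 * of_int Z) - y m\<bar> < \<epsilon>1"
    using kron_values[of J y \<epsilon>1] y01 \<epsilon>1 by blast
  define e2 where "e2 = \<epsilon> / (2 * (4 * M) powr p)"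
  have e2: "e2 > 0" unfolding e2_def using \<epsilon> M by simp
  obtain \<eta> where \<eta>: "\<eta> > 0" "\<eta> \<le> 1/4"
    and bad: "measure (lebesgue_on (cube a b))
      {x \<in> cube a b. \<not> (\<forall>k::'n. \<eta> \<le> frac (real K * (x$k - a) / (b - a)) \<and> frac (real K * (x$k - a) / (b - a)) \<le> 1 - \<eta>)} < e2"
    using bad_small[OF ab K(1) e2] by blast
  obtain \<phi> where \<phi>NN: "\<phi> \<in> NN_class N L" and \<phi>meas: "\<phi> \<in> borel_measurable borel"
    and \<phi>bd: "\<And>x. \<bar>\<phi> x\<bar> \<le> 3 * M"
    and \<phi>val: "\<And>x. x \<in> cube a b \<Longrightarrow> (\<forall>k. \<eta> \<le> frac (real K * (x$k - a) / (b - a)) \<and> frac (real K * (x$k - a) / (b - a)) \<le> 1 - \<eta>) \<Longrightarrow>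
       0 \<le> 2 * t * (1 / ((\<Sum>k\<in>UNIV. real K ^ \<iota>0 k * of_int \<lfloor>real K * (x$k - a) / (b - a)\<rfloor>) + c + 1)) + 2 * of_int Z \<Longrightarrow>
       \<phi> x = 2 * M * sigma1 (2 * t * (1 / ((\<Sum>k\<in>UNIV. real K ^ \<iota>0 k * of_int \<lfloor>real K * (x$k - a) / (b - a)\<rfloor>) + c + 1)) + 2 * of_int Z) - M"
    using net_exists[OF \<iota> ab K(1) \<eta>(1) c M(1) N L, of t Z] by blast
  define sk where "sk = (\<lambda>(x::real^'n) k. real K * (x$k - a) / (b - a))"
  define good where "good = (\<lambda>x. \<forall>k. \<eta> \<le> frac (sk x k) \<and> frac (sk x k) \<le> 1 - \<eta>)"
  have gv: "\<bar>\<phi> x - g x\<bar> < \<delta>0" if x: "x \<in> S" and gx: "good x" for x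
  proof -
    have xab: "a \<le> x$k \<and> x$k \<le> b" for k
      using x unfolding S_def cube_def by (simp add: mem_box_cart)
    have Kr: "real K \<ge> 1" using K by simp
    have sk0: "0 \<le> sk x k" for k unfolding sk_def using xab[of k] ab K by simp
    have skK: "sk x k < real K" for k
    proof -
      have "sk x k \<le> real K"
        unfolding sk_def using xab[of k] ab Kr by (simp add: field_simps)
      moreover have "sk x k \<noteq> real K"
      proof
        assume "sk x k = real K"
        then have "frac (sk x k) = 0" by simp
        then show False using gx \<eta> unfolding good_def by (metis not_le)
      qed
      ultimately show ?thesis by simp
    qed
    define F where "F = (\<lambda>k. \<lfloor>sk x k\<rfloor>)"
    have F: "0 \<le> F k \<and> F k < int K" for k
      unfolding F_def using sk0[of k] skK[of k] by (auto simp: floor_less_iff)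
    define mn where "mn = (\<Sum>k\<in>UNIV. nat (F k) * K ^ \<iota>0 k)"
    have mnJ: "mn < J" and msum: "(\<Sum>k\<in>UNIV. real K ^ \<iota>0 k * of_int (F k)) = real mn"
      and dig: "\<And>k. (mn div K ^ \<iota>0 k) mod K = nat (F k)"
      using cell_index[OF \<iota> F] unfolding mn_def J_def d_def by auto
    have msum': "(\<Sum>k\<in>UNIV. real K ^ \<iota>0 k * of_int \<lfloor>real K * (x$k - a) / (b - a)\<rfloor>) = real mn"
      using msum unfolding F_def sk_def .
    have good': "\<forall>k. \<eta> \<le> frac (real K * (x$k - a) / (b - a)) \<and> frac (real K * (x$k - a) / (b - a)) \<le> 1 - \<eta>"
      using gx unfolding good_def sk_def .
    have "\<phi> x = 2 * M * sigma1 (2 * t * (1 / (of_nat mn + c + 1)) + 2 * of_int Z) - M"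
      using \<phi>val[OF x[unfolded S_def] good'] kpos[OF mnJ] unfolding msum' by simp
    moreover have "g (cor mn) = 2 * M * y mn - M" unfolding y_def using M by (simp add: field_simps)
    ultimately have "\<phi> x - g (cor mn) = 2 * M * (sigma1 (2 * t * (1 / (of_nat mn + c + 1)) + 2 * of_int Z) - y mn)"
      by (simp add: algebra_simps)
    then have "\<bar>\<phi> x - g (cor mn)\<bar> \<le> 2 * M * \<epsilon>1"
      using kapp[OF mnJ] M by (simp add: abs_mult less_imp_le)
    then have d1: "\<bar>\<phi> x - g (cor mn)\<bar> \<le> \<delta>0 / 2" using \<epsilon>1 by simp
    have comp: "\<bar>(x - cor mn) $ k\<bar> \<le> (b - a) / real K" for k
    proof -
      have "cor mn $ k = a + (b - a) / real K * of_int (F k)"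
        unfolding cor_def using dig[of k] F[of k] by simp
      then have "(x - cor mn) $ k = (b - a) / real K * (sk x k - of_int (F k))"
        unfolding sk_def using cell_aux[of "b - a" "real K" "x$k" a "of_int (F k)"] ab Kr by simp
      also have "\<dots> = (b - a) / real K * frac (sk x k)" unfolding F_def frac_def by simp
      finally have "\<bar>(x - cor mn) $ k\<bar> = (b - a) / real K * frac (sk x k)"
        using ab Kr frac_ge_0 by (simp add: abs_mult)
      also have "\<dots> \<le> (b - a) / real K * 1"
        using ab Kr frac_lt_1[of "sk x k"] by (intro mult_left_mono) auto
      finally show ?thesis by simp
    qed
    have "dist x (cor mn) \<le> (\<Sum>k\<in>UNIV. \<bar>(x - cor mn) $ k\<bar>)"
      unfolding dist_norm by (rule norm_le_l1_cart)
    also have "\<dots> \<le> (\<Sum>k\<in>(UNIV::'n set). (b - a) / real K)" by (intro sum_mono comp)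
    also have "\<dots> = real d * (b - a) / real K" unfolding d_def by simp
    finally have "dist x (cor mn) < \<rho>" using K(2) by simp
    then have d2: "\<bar>g x - g (cor mn)\<bar> < \<delta>0 / 2" using \<rho>(2)[OF corS x] by simp
    show ?thesis using d1 d2 by linarith
  qed
  define Bad where "Bad = {x \<in> S. \<not> good x}"
  have Bad_m: "measure \<mu> Bad < e2"
    using bad unfolding Bad_def \<mu>_def S_def good_def sk_def .
  have skm: "(\<lambda>x. sk x k) \<in> borel_measurable \<mu>" for k
  proof -
    have "(\<lambda>x. sk x k) \<in> borel_measurable borel" unfolding sk_def using vec_nth_meas by measurable
    then show ?thesis unfolding \<mu>_def by (rule meas_lebesgue_on)
  qed
  have Bad_sets: "Bad \<in> sets \<mu>"
  proof -
    have "Bad = {x \<in> space \<mu>. \<exists>k\<in>UNIV. \<not> (\<eta> \<le> frac (sk x k) \<and> frac (sk x k) \<le> 1 - \<eta>)}"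
      unfolding Bad_def good_def sp by auto
    also have "\<dots> \<in> sets \<mu>" using skm by measurable
    finally show ?thesis .
  qed
  have hmeas: "(\<lambda>x. \<bar>\<phi> x - g x\<bar> powr p) \<in> borel_measurable \<mu>"
  proof -
    have "g \<in> borel_measurable borel" using g by (rule borel_measurable_continuous_onI)
    then have "(\<lambda>x. \<bar>\<phi> x - g x\<bar> powr p) \<in> borel_measurable borel" using \<phi>meas by measurable
    then show ?thesis unfolding \<mu>_def by (rule meas_lebesgue_on)
  qed
  have bd4: "\<bar>\<phi> x - g x\<bar> \<le> 4 * M" if "x \<in> S" for x
    using \<phi>bd[of x] M(2)[OF that] by linarith
  have pw: "\<bar>\<phi> x - g x\<bar> powr p \<le> \<delta>0 powr p + (4 * M) powr p * indicator Bad x" if x: "x \<in> S" for x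
  proof (cases "good x")
    case True
    have "\<bar>\<phi> x - g x\<bar> powr p \<le> \<delta>0 powr p" using gv[OF x True] p by (intro powr_mono2) auto
    moreover have "0 \<le> (4 * M) powr p * indicator Bad x" by simp
    ultimately show ?thesis by linarith
  next
    case False
    then have "indicator Bad x = (1::real)" unfolding Bad_def using x by simp
    then have i: "(4 * M) powr p * indicator Bad x = (4 * M) powr p" by simp
    have h1: "\<bar>\<phi> x - g x\<bar> powr p \<le> (4 * M) powr p" using bd4[OF x] p by (intro powr_mono2) auto
    have h0: "0 \<le> \<delta>0 powr p" by simp
    show ?thesis using i h0 h1 by linarith
  qed
  have hint: "integrable \<mu> (\<lambda>x. \<bar>\<phi> x - g x\<bar> powr p)"
  proof (rule finite_measure.integrable_const_bound[OF fm _ hmeas])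
    show "AE x in \<mu>. norm (\<bar>\<phi> x - g x\<bar> powr p) \<le> (4 * M) powr p"
      using bd4 p by (intro AE_I2) (auto simp: sp intro: powr_mono2)
  qed
  have Bfin: "emeasure \<mu> Bad < \<infinity>"
    using finite_measure.emeasure_finite[OF fm, of Bad] by (simp add: less_top)
  have bint: "integrable \<mu> (\<lambda>x. \<delta>0 powr p + (4 * M) powr p * indicator Bad x)"
    using finite_measure.integrable_const[OF fm] integrable_real_indicator[OF Bad_sets Bfin]
    by (intro Bochner_Integration.integrable_add integrable_mult_right) auto
  have "(\<integral>x. \<bar>\<phi> x - g x\<bar> powr p \<partial>\<mu>) \<le> (\<integral>x. \<delta>0 powr p + (4 * M) powr p * indicator Bad x \<partial>\<mu>)"
    using hint bint pw by (intro integral_mono) (auto simp: sp)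
  also have "\<dots> = \<delta>0 powr p * V + (4 * M) powr p * measure \<mu> Bad"
  proof -
    have "(\<integral>x. \<delta>0 powr p + (4 * M) powr p * indicator Bad x \<partial>\<mu>) =
        (\<integral>x. \<delta>0 powr p \<partial>\<mu>) + (\<integral>x. (4 * M) powr p * indicator Bad x \<partial>\<mu>)"
      using finite_measure.integrable_const[OF fm] integrable_real_indicator[OF Bad_sets Bfin]
      by (intro Bochner_Integration.integral_add) auto
    also have "\<dots> = \<delta>0 powr p * V + (4 * M) powr p * measure \<mu> Bad"
      using Bad_sets sets.sets_into_space[OF Bad_sets] unfolding V_def
      by (simp add: sp Int_absorb2)
    finally show ?thesis .
  qed
  also have "\<dots> < \<epsilon>"
  proof -
    have "\<delta>0 powr p \<le> \<delta>0" using \<delta>0 p by (intro powr_le_self) auto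
    then have "\<delta>0 powr p * V \<le> \<epsilon> / (4 * (V + 1)) * V" using \<delta>0 V0 by (intro mult_right_mono) auto
    also have "\<dots> \<le> \<epsilon> / 4" using \<epsilon> V0 by (simp add: field_simps)
    finally have 1: "\<delta>0 powr p * V \<le> \<epsilon> / 4" .
    have "(4 * M) powr p * measure \<mu> Bad < (4 * M) powr p * e2"
      using Bad_m M by (intro mult_strict_left_mono) auto
    also have "\<dots> = \<epsilon> / 2" unfolding e2_def using M by simp
    finally show ?thesis using 1 \<epsilon> by linarith
  qed
  finally show ?thesis using \<phi>NN \<phi>meas hint unfolding \<mu>_def S_def by blast
qed




lemma powr_tri:
  fixes u v p :: real
  assumes "0 < p"
  shows "\<bar>u + v\<bar> powr p \<le> 2 powr p * (\<bar>u\<bar> powr p + \<bar>v\<bar> powr p)"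
proof -
  define m where "m = max \<bar>u\<bar> \<bar>v\<bar>"
  have "\<bar>u + v\<bar> \<le> 2 * m" unfolding m_def by linarith
  then have "\<bar>u + v\<bar> powr p \<le> (2 * m) powr p" using assms by (intro powr_mono2) auto
  also have "\<dots> = 2 powr p * m powr p" unfolding m_def by (simp add: powr_mult)
  also have "m powr p \<le> \<bar>u\<bar> powr p + \<bar>v\<bar> powr p" unfolding m_def by (auto simp: max_def)
  then have "2 powr p * m powr p \<le> 2 powr p * (\<bar>u\<bar> powr p + \<bar>v\<bar> powr p)" by simp
  finally show ?thesis .
qed

lemma int_tri:
  fixes u v :: "'a \<Rightarrow> real" and p :: real
  assumes p: "0 < p" and um: "u \<in> borel_measurable M" and vm: "v \<in> borel_measurable M"
    and ui: "integrable M (\<lambda>x. \<bar>u x\<bar> powr p)" and vi: "integrable M (\<lambda>x. \<bar>v x\<bar> powr p)"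
  shows "integrable M (\<lambda>x. \<bar>u x + v x\<bar> powr p)"
    "(\<integral>x. \<bar>u x + v x\<bar> powr p \<partial>M) \<le> 2 powr p * ((\<integral>x. \<bar>u x\<bar> powr p \<partial>M) + (\<integral>x. \<bar>v x\<bar> powr p \<partial>M))"
proof -
  have bi: "integrable M (\<lambda>x. 2 powr p * (\<bar>u x\<bar> powr p + \<bar>v x\<bar> powr p))"
    using ui vi by (intro integrable_mult_right Bochner_Integration.integrable_add)
  have m: "(\<lambda>x. \<bar>u x + v x\<bar> powr p) \<in> borel_measurable M" using um vm by measurable
  show i: "integrable M (\<lambda>x. \<bar>u x + v x\<bar> powr p)"
    using bi m by (rule Bochner_Integration.integrable_bound) (auto intro!: AE_I2 powr_tri[OF p])
  have "(\<integral>x. \<bar>u x + v x\<bar> powr p \<partial>M) \<le> (\<integral>x. 2 powr p * (\<bar>u x\<bar> powr p + \<bar>v x\<bar> powr p) \<partial>M)"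
    using i bi by (intro integral_mono powr_tri[OF p])
  also have "\<dots> = 2 powr p * ((\<integral>x. \<bar>u x\<bar> powr p \<partial>M) + (\<integral>x. \<bar>v x\<bar> powr p \<partial>M))"
    using ui vi by simp
  finally show "(\<integral>x. \<bar>u x + v x\<bar> powr p \<partial>M) \<le> 2 powr p * ((\<integral>x. \<bar>u x\<bar> powr p \<partial>M) + (\<integral>x. \<bar>v x\<bar> powr p \<partial>M))" .
qed

lemma trunc_approx:
  fixes f :: "'a \<Rightarrow> real" and p \<epsilon> :: real
  assumes p: "0 < p" and fm: "f \<in> borel_measurable M" and fi: "integrable M (\<lambda>x. \<bar>f x\<bar> powr p)"
    and \<epsilon>: "\<epsilon> > 0"
  shows "\<exists>n::nat. integrable M (\<lambda>x. \<bar>f x - max (- real n) (min (real n) (f x))\<bar> powr p) \<and>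
     (\<integral>x. \<bar>f x - max (- real n) (min (real n) (f x))\<bar> powr p \<partial>M) < \<epsilon>"
proof -
  define s where "s = (\<lambda>(n::nat) x. \<bar>f x - max (- real n) (min (real n) (f x))\<bar> powr p)"
  have sm: "s n \<in> borel_measurable M" for n unfolding s_def using fm by measurable
  have sb: "\<bar>f x - max (- real n) (min (real n) (f x))\<bar> \<le> \<bar>f x\<bar>" for n x by auto
  have sbd: "norm (s n x) \<le> \<bar>f x\<bar> powr p" for n x
    unfolding s_def using sb[of x n] p by (simp add: powr_mono2)
  have si: "integrable M (s n)" for n
    using fi sm by (rule Bochner_Integration.integrable_bound) (auto intro!: AE_I2 simp: sbd[simplified])
  have lim: "(\<lambda>n. s n x) \<longlonglongrightarrow> 0" for x
  proof -
    obtain n0 :: nat where "\<bar>f x\<bar> \<le> real n0" using real_arch_simple by blast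
    then have "eventually (\<lambda>n. s n x = 0) sequentially"
      unfolding eventually_sequentially s_def using p
      by (intro exI[of _ n0]) (auto simp: max_def min_def)
    then show ?thesis by (rule tendsto_eventually)
  qed
  have "(\<lambda>n. integral\<^sup>L M (s n)) \<longlonglongrightarrow> integral\<^sup>L M (\<lambda>x. 0)"
    using sm fi lim sbd by (intro integral_dominated_convergence[where w="\<lambda>x. \<bar>f x\<bar> powr p"]) auto
  then have "(\<lambda>n. integral\<^sup>L M (s n)) \<longlonglongrightarrow> 0" by simp
  then have "eventually (\<lambda>n. integral\<^sup>L M (s n) < \<epsilon>) sequentially" using \<epsilon> by (rule order_tendstoD)
  then obtain n where "integral\<^sup>L M (s n) < \<epsilon>" by (auto dest: eventually_happens)
  then show ?thesis using si[of n] unfolding s_def by blast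
qed

lemma eta_aux: "P > 0 \<Longrightarrow> n \<ge> 0 \<Longrightarrow> P * (n * (e / (4 * P * (n + 1)))) = e * n / (4 * (n + 1))"
  for P n e :: real
proof -
  assume P: "P > 0" and n: "n \<ge> 0"
  have "e / (4 * P * (n + 1)) = (e / (4 * (n + 1))) / P" by (simp add: ac_simps)
  then have "P * (n * (e / (4 * P * (n + 1)))) = n * (e / (4 * (n + 1)))" using P by simp
  then show ?thesis by simp
qed

lemma bounded_cont_approx:
  fixes h :: "real^'n::finite \<Rightarrow> real" and a b B p \<epsilon> :: real
  assumes hm: "h \<in> borel_measurable (lebesgue_on (cube a b))" and hb: "\<And>x. x \<in> cube a b \<Longrightarrow> \<bar>h x\<bar> \<le> B"
    and B: "0 \<le> B" and p: "1 \<le> p" and \<epsilon>: "\<epsilon> > 0"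
  shows "\<exists>g. continuous_on UNIV g \<and> integrable (lebesgue_on (cube a b)) (\<lambda>x. \<bar>h x - g x\<bar> powr p) \<and>
    (\<integral>x. \<bar>h x - g x\<bar> powr p \<partial>lebesgue_on (cube a b)) < \<epsilon>"
proof -
  define S where "S = (cube a b :: (real^'n) set)"
  define \<mu> where "\<mu> = lebesgue_on S"
  define V where "V = measure \<mu> S"
  have fm: "finite_measure \<mu>" unfolding \<mu>_def S_def by (rule finite_measure_lebesgue_on[OF cube_lmeas])
  have sp: "space \<mu> = S" unfolding \<mu>_def by simp
  have V0: "V \<ge> 0" unfolding V_def by simp
  have Ssets: "S \<in> sets lebesgue" unfolding S_def by (rule cube_sets)
  have setsI: "X \<in> sets \<mu>" if "X \<subseteq> S" "X \<in> sets lebesgue" for X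
    unfolding \<mu>_def using sets_restrict_space_iff[of S lebesgue X] Ssets that by simp
  have setsD: "X \<in> sets lebesgue" if "X \<in> sets \<mu>" for X
    using that unfolding \<mu>_def using sets_restrict_space_iff[of S lebesgue X] Ssets by simp
  define \<delta> where "\<delta> = min 1 (\<epsilon> / (4 * (V + 1)))"
  have \<delta>: "0 < \<delta>" "\<delta> \<le> 1" "\<delta> \<le> \<epsilon> / (4 * (V + 1))" unfolding \<delta>_def using \<epsilon> V0 by auto
  define R :: int where "R = \<lceil>B / \<delta>\<rceil> + 1"
  define I where "I = {-R..R}"
  have finI: "finite I" unfolding I_def by simp
  define C where "C = 2 * B + 2"
  have C: "C > 0" unfolding C_def using B by simp
  define \<eta> where "\<eta> = \<epsilon> / (4 * C powr p * (real (card I) + 1))"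
  have \<eta>: "\<eta> > 0" unfolding \<eta>_def using \<epsilon> C by simp
  define A where "A = (\<lambda>i::int. {x \<in> S. \<lfloor>h x / \<delta>\<rfloor> = i})"
  have hm': "h \<in> borel_measurable \<mu>" using hm unfolding \<mu>_def S_def .
  have Asets: "A i \<in> sets lebesgue" for i
  proof -
    have "A i = {x \<in> space \<mu>. \<lfloor>h x / \<delta>\<rfloor> = i}" unfolding A_def sp by simp
    also have "\<dots> \<in> sets \<mu>" using hm' by measurable
    finally show ?thesis by (rule setsD)
  qed
  have "\<forall>i. \<exists>F. closed F \<and> F \<subseteq> A i \<and> A i - F \<in> lmeasurable \<and> emeasure lebesgue (A i - F) < ennreal \<eta>"
  proof
    fix i
    obtain F where "closed F" "F \<subseteq> A i" "A i - F \<in> lmeasurable" "emeasure lebesgue (A i - F) < ennreal \<eta>"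
      using sets_lebesgue_inner_closed[OF Asets \<eta>] by blast
    then show "\<exists>F. closed F \<and> F \<subseteq> A i \<and> A i - F \<in> lmeasurable \<and> emeasure lebesgue (A i - F) < ennreal \<eta>" by blast
  qed
  then obtain F where Fc: "\<And>i. closed (F i)" and FA: "\<And>i. F i \<subseteq> A i"
    and Fl: "\<And>i. A i - F i \<in> lmeasurable" and Fe: "\<And>i. emeasure lebesgue (A i - F i) < ennreal \<eta>"
    by metis
  have Fm: "measure lebesgue (A i - F i) < \<eta>" for i
    using Fe[of i] emeasure_eq_measure2[OF Fl[of i]] \<eta> by (simp add: ennreal_less_iff)
  define Fu where "Fu = (\<Union>i\<in>I. F i)"
  have Fuc: "closed Fu" unfolding Fu_def using finI Fc by (intro closed_UN) auto
  define h\<delta> where "h\<delta> = (\<lambda>x. \<delta> * of_int \<lfloor>h x / \<delta>\<rfloor>)"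
  have hcont: "continuous_on Fu h\<delta>"
    unfolding Fu_def
  proof (rule continuous_on_closed_Union[OF finI])
    fix i assume "i \<in> I"
    show "closed (F i)" by (rule Fc)
    have "continuous_on (F i) (\<lambda>x. \<delta> * of_int i)" by simp
    moreover have "\<And>x. x \<in> F i \<Longrightarrow> h\<delta> x = \<delta> * of_int i" unfolding h\<delta>_def using FA unfolding A_def by blast
    ultimately show "continuous_on (F i) h\<delta>" using continuous_on_cong by force
  qed
  have FuS: "Fu \<subseteq> S" unfolding Fu_def using FA unfolding A_def by blast
  have hdiff: "0 \<le> h x - h\<delta> x \<and> h x - h\<delta> x \<le> \<delta>" for x
  proof -
    have "h x - h\<delta> x = \<delta> * (h x / \<delta> - of_int \<lfloor>h x / \<delta>\<rfloor>)" unfolding h\<delta>_def using \<delta> by (simp add: field_simps)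
    moreover have "0 \<le> h x / \<delta> - of_int \<lfloor>h x / \<delta>\<rfloor>" "h x / \<delta> - of_int \<lfloor>h x / \<delta>\<rfloor> \<le> 1" by linarith+
    ultimately show ?thesis using \<delta> by (auto simp: mult_le_cancel_left1)
  qed
  have hdb: "norm (h\<delta> x) \<le> B + 1" if "x \<in> Fu" for x
    using hdiff[of x] hb[of x] FuS that \<delta> unfolding S_def by auto
  obtain g where g: "continuous_on UNIV g" and gF: "\<And>x. x \<in> Fu \<Longrightarrow> g x = h\<delta> x"
    and gb: "\<And>x. norm (g x) \<le> B + 1"
    using Tietze[OF hcont _ _ hdb, of UNIV] Fuc B by (auto simp: closedin_closed_eq)
  define Bad where "Bad = S - Fu"
  have Bad_sets: "Bad \<in> sets \<mu>"
    unfolding Bad_def using Ssets Fuc by (intro setsI) (auto intro: borel_closed)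
  have Bad_sub: "Bad \<subseteq> (\<Union>i\<in>I. A i - F i)"
  proof
    fix x assume x: "x \<in> Bad"
    then have xS: "x \<in> S" unfolding Bad_def by simp
    define i where "i = \<lfloor>h x / \<delta>\<rfloor>"
    have "\<bar>h x / \<delta>\<bar> \<le> B / \<delta>" using hb[of x] xS \<delta> unfolding S_def by (simp add: abs_div divide_right_mono)
    then have r: "- (B / \<delta>) \<le> h x / \<delta>" "h x / \<delta> \<le> B / \<delta>" by (simp_all only: abs_le_iff) linarith+
    have c1: "B / \<delta> \<le> of_int \<lceil>B / \<delta>\<rceil>" by (rule le_of_int_ceiling)
    have f1: "of_int i \<le> h x / \<delta>" "h x / \<delta> < of_int i + 1" unfolding i_def by linarith+
    have "real_of_int i \<le> real_of_int R" "real_of_int (- R) \<le> real_of_int i"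
      unfolding R_def of_int_add of_int_minus of_int_1 using r c1 f1 by linarith+
    then have "i \<in> I" unfolding I_def by simp
    moreover have "x \<in> A i" unfolding A_def i_def using xS by simp
    moreover have "x \<notin> F i" using x \<open>i \<in> I\<close> unfolding Bad_def Fu_def by auto
    ultimately show "x \<in> (\<Union>i\<in>I. A i - F i)" by blast
  qed
  have ADsets: "A i - F i \<in> sets \<mu>" for i
    using Fl[of i] unfolding A_def by (intro setsI) (auto dest: fmeasurableD)
  have mBad: "measure \<mu> Bad \<le> real (card I) * \<eta>"
  proof -
    have "measure \<mu> Bad \<le> measure \<mu> (\<Union>i\<in>I. A i - F i)"
      using Bad_sub ADsets finI by (intro finite_measure.finite_measure_mono[OF fm]) auto
    also have "\<dots> \<le> (\<Sum>i\<in>I. measure \<mu> (A i - F i))"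
      using ADsets finI by (intro measure_UNION_le) auto
    also have "\<dots> \<le> (\<Sum>i\<in>I. \<eta>)"
    proof (intro sum_mono)
      fix i
      have "measure \<mu> (A i - F i) = measure lebesgue (A i - F i)"
        unfolding \<mu>_def using Ssets by (intro measure_restrict_space) (auto simp: A_def)
      then show "measure \<mu> (A i - F i) \<le> \<eta>" using Fm[of i] by simp
    qed
    also have "\<dots> = real (card I) * \<eta>" by simp
    finally show ?thesis .
  qed
  have gm: "g \<in> borel_measurable borel" using g by (rule borel_measurable_continuous_onI)
  have hmeas: "(\<lambda>x. \<bar>h x - g x\<bar> powr p) \<in> borel_measurable \<mu>"
  proof -
    have "g \<in> borel_measurable \<mu>" unfolding \<mu>_def using gm by (rule meas_lebesgue_on)
    then show ?thesis using hm' by measurable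
  qed
  have bdC: "\<bar>h x - g x\<bar> \<le> C" if "x \<in> S" for x
    using hb[of x] gb[of x] that unfolding C_def S_def by auto
  have pw: "\<bar>h x - g x\<bar> powr p \<le> \<delta> powr p + C powr p * indicator Bad x" if x: "x \<in> S" for x
  proof (cases "x \<in> Fu")
    case True
    have "\<bar>h x - g x\<bar> \<le> \<delta>" using hdiff[of x] gF[OF True] by simp
    then have "\<bar>h x - g x\<bar> powr p \<le> \<delta> powr p" using p by (intro powr_mono2) auto
    moreover have "0 \<le> C powr p * indicator Bad x" by simp
    ultimately show ?thesis by linarith
  next
    case False
    then have "indicator Bad x = (1::real)" unfolding Bad_def using x by simp
    then have i: "C powr p * indicator Bad x = C powr p" by simp
    have h1: "\<bar>h x - g x\<bar> powr p \<le> C powr p" using bdC[OF x] p by (intro powr_mono2) auto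
    have h0: "0 \<le> \<delta> powr p" by simp
    show ?thesis using i h0 h1 by linarith
  qed
  have hint: "integrable \<mu> (\<lambda>x. \<bar>h x - g x\<bar> powr p)"
  proof (rule finite_measure.integrable_const_bound[OF fm _ hmeas])
    show "AE x in \<mu>. norm (\<bar>h x - g x\<bar> powr p) \<le> C powr p"
      using bdC p by (intro AE_I2) (auto simp: sp intro: powr_mono2)
  qed
  have Bfin: "emeasure \<mu> Bad < \<infinity>"
    using finite_measure.emeasure_finite[OF fm, of Bad] by (simp add: less_top)
  have bint: "integrable \<mu> (\<lambda>x. \<delta> powr p + C powr p * indicator Bad x)"
    using finite_measure.integrable_const[OF fm] integrable_real_indicator[OF Bad_sets Bfin]
    by (intro Bochner_Integration.integrable_add integrable_mult_right) auto
  have "(\<integral>x. \<bar>h x - g x\<bar> powr p \<partial>\<mu>) \<le> (\<integral>x. \<delta> powr p + C powr p * indicator Bad x \<partial>\<mu>)"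
    using hint bint pw by (intro integral_mono) (auto simp: sp)
  also have "\<dots> = \<delta> powr p * V + C powr p * measure \<mu> Bad"
  proof -
    have "(\<integral>x. \<delta> powr p + C powr p * indicator Bad x \<partial>\<mu>) =
        (\<integral>x. \<delta> powr p \<partial>\<mu>) + (\<integral>x. C powr p * indicator Bad x \<partial>\<mu>)"
      using finite_measure.integrable_const[OF fm] integrable_real_indicator[OF Bad_sets Bfin]
      by (intro Bochner_Integration.integral_add) auto
    also have "\<dots> = \<delta> powr p * V + C powr p * measure \<mu> Bad"
      using Bad_sets sets.sets_into_space[OF Bad_sets] unfolding V_def
      by (simp add: sp Int_absorb2)
    finally show ?thesis .
  qed
  also have "\<dots> < \<epsilon>"
  proof -
    have "\<delta> powr p \<le> \<delta>" using \<delta> p by (intro powr_le_self) auto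
    then have "\<delta> powr p * V \<le> \<epsilon> / (4 * (V + 1)) * V" using \<delta> V0 by (intro mult_right_mono) auto
    also have "\<dots> \<le> \<epsilon> / 4" using \<epsilon> V0 by (simp add: field_simps)
    finally have 1: "\<delta> powr p * V \<le> \<epsilon> / 4" .
    have "C powr p * measure \<mu> Bad \<le> C powr p * (real (card I) * \<eta>)"
      using mBad C by (intro mult_left_mono) auto
    also have "\<dots> = \<epsilon> * real (card I) / (4 * (real (card I) + 1))"
      unfolding \<eta>_def using C by (intro eta_aux) auto
    also have "\<dots> \<le> \<epsilon> / 4" using \<epsilon> by (simp add: field_simps)
    finally show ?thesis using 1 \<epsilon> by linarith
  qed
  finally show ?thesis using g hint unfolding \<mu>_def S_def by blast
qed




lemma dens:
  fixes f :: "real^'n::finite \<Rightarrow> real" and a b p \<epsilon> :: real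
  assumes fm: "f \<in> borel_measurable (lebesgue_on (cube a b))"
    and fi: "integrable (lebesgue_on (cube a b)) (\<lambda>x. \<bar>f x\<bar> powr p)"
    and p: "1 \<le> p" and \<epsilon>: "\<epsilon> > 0"
  shows "\<exists>g. continuous_on UNIV g \<and> integrable (lebesgue_on (cube a b)) (\<lambda>x. \<bar>f x - g x\<bar> powr p) \<and>
    (\<integral>x. \<bar>f x - g x\<bar> powr p \<partial>lebesgue_on (cube a b)) < \<epsilon>"
proof -
  define \<mu> where "\<mu> = (lebesgue_on (cube a b) :: (real^'n) measure)"
  define e where "e = \<epsilon> / (2 * 2 powr p)"
  have e: "e > 0" unfolding e_def using \<epsilon> by simp
  have p0: "0 < p" using p by simp
  obtain n :: nat where ni: "integrable \<mu> (\<lambda>x. \<bar>f x - max (- real n) (min (real n) (f x))\<bar> powr p)"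
    and nl: "(\<integral>x. \<bar>f x - max (- real n) (min (real n) (f x))\<bar> powr p \<partial>\<mu>) < e"
    using trunc_approx[OF p0 fm fi e] unfolding \<mu>_def by blast
  define h where "h = (\<lambda>x. max (- real n) (min (real n) (f x)))"
  have ni': "integrable \<mu> (\<lambda>x. \<bar>f x - h x\<bar> powr p)" using ni unfolding h_def .
  have nl': "(\<integral>x. \<bar>f x - h x\<bar> powr p \<partial>\<mu>) < e" using nl unfolding h_def .
  have hm: "h \<in> borel_measurable (lebesgue_on (cube a b))" unfolding h_def using fm by measurable
  obtain g where g: "continuous_on UNIV g" and gi: "integrable \<mu> (\<lambda>x. \<bar>h x - g x\<bar> powr p)"
    and gl: "(\<integral>x. \<bar>h x - g x\<bar> powr p \<partial>\<mu>) < e"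
  proof -
    have hb: "\<And>x. x \<in> cube a b \<Longrightarrow> \<bar>h x\<bar> \<le> real n" unfolding h_def by auto
    show ?thesis using bounded_cont_approx[OF hm hb _ p e] that unfolding \<mu>_def by auto
  qed
  have gm: "g \<in> borel_measurable \<mu>"
    unfolding \<mu>_def using g by (intro meas_lebesgue_on borel_measurable_continuous_onI)
  have um: "(\<lambda>x. f x - h x) \<in> borel_measurable \<mu>" using fm hm unfolding \<mu>_def by measurable
  have vm: "(\<lambda>x. h x - g x) \<in> borel_measurable \<mu>" using hm gm unfolding \<mu>_def by measurable
  have eq: "(\<lambda>x. \<bar>(f x - h x) + (h x - g x)\<bar> powr p) = (\<lambda>x. \<bar>f x - g x\<bar> powr p)" by simp
  note tri = int_tri[OF p0 um vm ni' gi]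
  have "(\<integral>x. \<bar>f x - g x\<bar> powr p \<partial>\<mu>) \<le> 2 powr p * ((\<integral>x. \<bar>f x - h x\<bar> powr p \<partial>\<mu>) + (\<integral>x. \<bar>h x - g x\<bar> powr p \<partial>\<mu>))"
    using tri(2) unfolding eq .
  also have "\<dots> < 2 powr p * (e + e)"
    using nl' gl by (intro mult_strict_left_mono) auto
  also have "\<dots> = \<epsilon>" unfolding e_def by simp
  finally show ?thesis using g tri(1) unfolding eq \<mu>_def by blast
qed

theorem corollary3:
  fixes a b p \<epsilon> :: real and N L :: nat and f :: "real^'n \<Rightarrow> real"
  assumes "a < b" and "1 \<le> p"
    and "N \<ge> 36 * CARD('n) * (2 * CARD('n) + 1)" and "L \<ge> 11"
    and "f \<in> borel_measurable (lebesgue_on (cube a b))"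
    and "integrable (lebesgue_on (cube a b)) (\<lambda>x. \<bar>f x\<bar> powr p)"
    and "\<epsilon> > 0"
  shows "\<exists>\<phi>\<in>NN_class N L.
           integrable (lebesgue_on (cube a b)) (\<lambda>x. \<bar>\<phi> x - f x\<bar> powr p) \<and>
           (\<integral>x. \<bar>\<phi> x - f x\<bar> powr p \<partial>lebesgue_on (cube a b)) powr (1 / p) < \<epsilon>"
proof -
  note ab = assms(1) and p = assms(2) and fm = assms(5) and fi = assms(6) and \<epsilon> = assms(7)
  define \<mu> where "\<mu> = (lebesgue_on (cube a b) :: (real^'n) measure)"
  have p0: "0 < p" using p by simp
  define e where "e = \<epsilon> powr p / (2 * 2 powr p)"
  have e: "e > 0" unfolding e_def using \<epsilon> by simp
  have N: "4 * CARD('n) \<le> N"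
  proof -
    have "4 * CARD('n) \<le> 36 * CARD('n) * (2 * CARD('n) + 1)" by simp
    then show ?thesis using assms(3) by linarith
  qed
  have L: "5 \<le> L" using assms(4) by simp
  obtain g where g: "continuous_on UNIV g" and gi: "integrable \<mu> (\<lambda>x. \<bar>f x - g x\<bar> powr p)"
    and gl: "(\<integral>x. \<bar>f x - g x\<bar> powr p \<partial>\<mu>) < e"
    using dens[OF fm fi p e] unfolding \<mu>_def by blast
  obtain \<phi> where \<phi>NN: "\<phi> \<in> NN_class N L" and \<phi>m: "\<phi> \<in> borel_measurable borel"
    and \<phi>i: "integrable \<mu> (\<lambda>x. \<bar>\<phi> x - g x\<bar> powr p)"
    and \<phi>l: "(\<integral>x. \<bar>\<phi> x - g x\<bar> powr p \<partial>\<mu>) < e"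
    using net_approx[OF ab p g N L e] unfolding \<mu>_def by blast
  have gm: "g \<in> borel_measurable \<mu>"
    unfolding \<mu>_def using g by (intro meas_lebesgue_on borel_measurable_continuous_onI)
  have \<phi>m': "\<phi> \<in> borel_measurable \<mu>" unfolding \<mu>_def using \<phi>m by (rule meas_lebesgue_on)
  have fm': "f \<in> borel_measurable \<mu>" unfolding \<mu>_def using fm .
  have um: "(\<lambda>x. \<phi> x - g x) \<in> borel_measurable \<mu>" using \<phi>m' gm by measurable
  have vm: "(\<lambda>x. g x - f x) \<in> borel_measurable \<mu>" using gm fm' by measurable
  have comm: "(\<lambda>x. \<bar>g x - f x\<bar> powr p) = (\<lambda>x. \<bar>f x - g x\<bar> powr p)" by (simp add: abs_minus_commute)
  have gi': "integrable \<mu> (\<lambda>x. \<bar>g x - f x\<bar> powr p)" using gi unfolding comm .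
  have eq: "(\<lambda>x. \<bar>(\<phi> x - g x) + (g x - f x)\<bar> powr p) = (\<lambda>x. \<bar>\<phi> x - f x\<bar> powr p)" by simp
  note tri = int_tri[OF p0 um vm \<phi>i gi']
  have "(\<integral>x. \<bar>\<phi> x - f x\<bar> powr p \<partial>\<mu>) \<le> 2 powr p * ((\<integral>x. \<bar>\<phi> x - g x\<bar> powr p \<partial>\<mu>) + (\<integral>x. \<bar>g x - f x\<bar> powr p \<partial>\<mu>))"
    using tri(2) unfolding eq .
  also have "\<dots> < 2 powr p * (e + e)"
    using \<phi>l gl unfolding comm by (intro mult_strict_left_mono) auto
  also have "\<dots> = \<epsilon> powr p" unfolding e_def by simp
  finally have lt: "(\<integral>x. \<bar>\<phi> x - f x\<bar> powr p \<partial>\<mu>) < \<epsilon> powr p" .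
  have "(\<integral>x. \<bar>\<phi> x - f x\<bar> powr p \<partial>\<mu>) powr (1 / p) < (\<epsilon> powr p) powr (1 / p)"
    using lt p0 by (intro powr_less_mono2) (auto intro: integral_nonneg_AE)
  also have "\<dots> = \<epsilon>" using \<epsilon> p0 by (simp add: powr_powr)
  finally show ?thesis using \<phi>NN tri(1) unfolding eq \<mu>_def by blast
qed


end
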